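(* Let $\alpha\ge2$ and let $x_\alpha,\dots,x_1$ be integers such that $x_j=3$ for some $j>1$ and $x_i=2$ for all $i\ne j$. Then: (i) up to isomorphism, exactly one graph realizes $(1,x_\alpha,\dots,x_1)$; (ii) $(1,x_\alpha,\dots,x_1,1)$ is not realizable; (iii) up to isomorphism, exactly one graph 0-realizes $(x_\alpha,\dots,x_1)$; (iv) $(x_\alpha,\dots,x_1,1)$ is not 0-realizable.
   Context: All graphs are finite, nonempty, and reflexive (every vertex has a loop). $N[v]$ is the closed neighborhood of $v$ (including $v$). For distinct $v,w$, $w$ strictly corners $v$ if $N[v]\subsetneq N[w]$; $v$ is then a strict corner. A vertex dominates a set if adjacent to all its vertices. Corner ranking: set $G^{(1)}=G$, $k=1$. If $G^{(k)}$ is a clique, give all its vertices rank $k$ and stop. Else if $G^{(k)}$ has no strict corners, give all its vertices rank $\infty$ and stop. Else give every strict corner of $G^{(k)}$ rank $k$, delete them to get $G^{(k+1)}$ (induced subgraph), increase $k$ and repeat. The corner rank is the largest rank of a vertex; $X_k$ is the set of rank-$k$ vertices; cop-win graphs are exactly those of finite corner rank. A graph of finite corner rank $\beta\ge2$ is of type 1 if some (equivalently every) vertex of rank $\beta$ dominates $V(G^{(\beta-1)})$, and of type 0 otherwise. A vector is a finite list of positive integers; the rank cardinality vector of a graph of corner rank $\beta$ is $(y_\beta,\dots,y_1)$ with $y_k=|X_k|$, and the graph realizes it. A vector is realizable if some cop-win graph realizes it, and a graph 0-realizes a vector if it is a cop-win graph of type 0 realizing it; the vector is then 0-realizable. *)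

theory Defs
  imports Main
begin

definition graph :: "'a set \<Rightarrow> ('a \<times> 'a) set \<Rightarrow> bool" where
  "graph V E \<longleftrightarrow> finite V \<and> V \<noteq> {} \<and> E \<subseteq> V \<times> V \<and> sym E \<and> (\<forall>v\<in>V. (v, v) \<in> E)"

definition nbh :: "('a \<times> 'a) set \<Rightarrow> 'a set \<Rightarrow> 'a \<Rightarrow> 'a set" where
  "nbh E S v = {w \<in> S. (v, w) \<in> E}"

definition is_clique :: "('a \<times> 'a) set \<Rightarrow> 'a set \<Rightarrow> bool" where
  "is_clique E S \<longleftrightarrow> (\<forall>v\<in>S. \<forall>w\<in>S. (v, w) \<in> E)"

definition strict_corners :: "('a \<times> 'a) set \<Rightarrow> 'a set \<Rightarrow> 'a set" where
  "strict_corners E S = {v \<in> S. \<exists>w\<in>S. w \<noteq> v \<and> nbh E S v \<subset> nbh E S w}"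

definition cr_step :: "('a \<times> 'a) set \<Rightarrow> 'a set \<Rightarrow> 'a set" where
  "cr_step E S = (if is_clique E S \<or> strict_corners E S = {} then S else S - strict_corners E S)"

text \<open>remaining E V k is the vertex set of G^(k+1).\<close>
definition remaining :: "'a set \<Rightarrow> ('a \<times> 'a) set \<Rightarrow> nat \<Rightarrow> 'a set" where
  "remaining V E k = (cr_step E ^^ k) V"

text \<open>Cop-win = finite corner rank: the procedure ends with a clique.\<close>
definition cop_win :: "'a set \<Rightarrow> ('a \<times> 'a) set \<Rightarrow> bool" where
  "cop_win V E \<longleftrightarrow> (\<exists>k. is_clique E (remaining V E k))"

text \<open>Corner rank (meaningful for cop-win graphs).\<close>
definition corner_rank :: "'a set \<Rightarrow> ('a \<times> 'a) set \<Rightarrow> nat" where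
  "corner_rank V E = Suc (LEAST k. is_clique E (remaining V E k))"

definition rank_set :: "'a set \<Rightarrow> ('a \<times> 'a) set \<Rightarrow> nat \<Rightarrow> 'a set" where
  "rank_set V E k =
     (if k = 0 \<or> k > corner_rank V E then {}
      else if k = corner_rank V E then remaining V E (k - 1)
      else strict_corners E (remaining V E (k - 1)))"

definition rank_card_vector :: "'a set \<Rightarrow> ('a \<times> 'a) set \<Rightarrow> nat list" where
  "rank_card_vector V E = map (\<lambda>k. card (rank_set V E k)) (rev [1..<Suc (corner_rank V E)])"

definition type1 :: "'a set \<Rightarrow> ('a \<times> 'a) set \<Rightarrow> bool" where
  "type1 V E \<longleftrightarrow> corner_rank V E \<ge> 2 \<and>
     (\<exists>v\<in>rank_set V E (corner_rank V E).
        \<forall>u\<in>remaining V E (corner_rank V E - 2). (v, u) \<in> E)"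

definition type0 :: "'a set \<Rightarrow> ('a \<times> 'a) set \<Rightarrow> bool" where
  "type0 V E \<longleftrightarrow> corner_rank V E \<ge> 2 \<and> \<not> type1 V E"

definition realizes :: "'a set \<Rightarrow> ('a \<times> 'a) set \<Rightarrow> nat list \<Rightarrow> bool" where
  "realizes V E xs \<longleftrightarrow> graph V E \<and> cop_win V E \<and> rank_card_vector V E = xs"

definition zero_realizes :: "'a set \<Rightarrow> ('a \<times> 'a) set \<Rightarrow> nat list \<Rightarrow> bool" where
  "zero_realizes V E xs \<longleftrightarrow> realizes V E xs \<and> type0 V E"

definition graph_iso :: "'a set \<Rightarrow> ('a \<times> 'a) set \<Rightarrow> 'b set \<Rightarrow> ('b \<times> 'b) set \<Rightarrow> bool" where
  "graph_iso V1 E1 V2 E2 \<longleftrightarrow> (\<exists>f. bij_betw f V1 V2 \<and>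
     (\<forall>u\<in>V1. \<forall>v\<in>V1. (u, v) \<in> E1 \<longleftrightarrow> (f u, f v) \<in> E2))"

definition vec_of :: "nat \<Rightarrow> (nat \<Rightarrow> nat) \<Rightarrow> nat list" where
  "vec_of \<alpha> x = map x (rev [1..<Suc \<alpha>])"

end

theory Submission
  imports Defs
begin

lemma nbh_mem[simp]: "w \<in> nbh E S v \<longleftrightarrow> w \<in> S \<and> (v,w) \<in> E"
  by (simp add: nbh_def)

lemma sc_mem: "v \<in> strict_corners E S \<longleftrightarrow> v \<in> S \<and> (\<exists>w\<in>S. w \<noteq> v \<and> nbh E S v \<subset> nbh E S w)"
  by (simp add: strict_corners_def)

lemma nbh_sub: "nbh E S v \<subseteq> S" by auto

lemma dom_exists:
  assumes fin: "finite S" and v: "v \<in> strict_corners E S"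
  shows "\<exists>w\<in>S - strict_corners E S. w \<noteq> v \<and> nbh E S v \<subset> nbh E S w"
proof -
  define D where "D = {w\<in>S. w \<noteq> v \<and> nbh E S v \<subset> nbh E S w}"
  have Dne: "D \<noteq> {}" using v by (auto simp: D_def sc_mem)
  have Dfin: "finite D" using fin by (auto simp: D_def)
  obtain w where w: "w \<in> D" "card (nbh E S w) = Max ((\<lambda>w. card (nbh E S w)) ` D)"
    by (metis (mono_tags, lifting) Dfin Dne Max_in finite_imageI imageE image_is_empty)
  have "w \<notin> strict_corners E S"
  proof
    assume "w \<in> strict_corners E S"
    then obtain w' where w': "w' \<in> S" "w' \<noteq> w" "nbh E S w \<subset> nbh E S w'" by (auto simp: sc_mem)
    have "nbh E S v \<subset> nbh E S w'" using w(1) w'(3) by (auto simp: D_def)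
    hence "w' \<noteq> v" by auto
    hence "w' \<in> D" using w' \<open>nbh E S v \<subset> nbh E S w'\<close> by (auto simp: D_def)
    hence "card (nbh E S w') \<le> card (nbh E S w)" using w(2) Dfin by simp
    moreover have "card (nbh E S w) < card (nbh E S w')"
      using w'(3) fin by (meson finite_subset nbh_sub psubset_card_mono)
    ultimately show False by simp
  qed
  thus ?thesis using w(1) by (auto simp: D_def)
qed

lemma priv_child:
  assumes "S' \<subseteq> S" "v \<in> S'" "w \<in> S'" "w \<noteq> v" "v \<notin> strict_corners E S"
    "nbh E S' v \<subset> nbh E S' w"
  shows "\<exists>x\<in>S - S'. (v,x) \<in> E \<and> (w,x) \<notin> E"
proof (rule ccontr)
  assume H: "\<not> ?thesis"
  have "nbh E S v \<subseteq> nbh E S w"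
  proof
    fix y assume y: "y \<in> nbh E S v"
    show "y \<in> nbh E S w"
    proof (cases "y \<in> S'")
      case True thus ?thesis using y assms(6) by auto
    next
      case False thus ?thesis using y H by auto
    qed
  qed
  moreover obtain y where "y \<in> nbh E S' w" "y \<notin> nbh E S' v" using assms(6) by blast
  hence "y \<in> nbh E S w" "y \<notin> nbh E S v" using assms(1) by auto
  ultimately have "nbh E S v \<subset> nbh E S w" by auto
  thus False using assms by (auto simp: sc_mem)
qed

lemma cr_step_sub: "cr_step E S \<subseteq> S" by (auto simp: cr_step_def)

lemma rem_Suc: "remaining V E (Suc k) = cr_step E (remaining V E k)"
  by (simp add: remaining_def)

lemma rem_0: "remaining V E 0 = V" by (simp add: remaining_def)

lemma rem_sub: "remaining V E k \<subseteq> V"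
  by (induction k) (auto simp: rem_0 rem_Suc dest: subsetD[OF cr_step_sub])

lemma rem_stat:
  assumes "cr_step E (remaining V E k) = remaining V E k"
  shows "remaining V E (k + i) = remaining V E k"
  using assms by (induction i) (auto simp: rem_Suc)

lemma clique_stat: "is_clique E S \<Longrightarrow> cr_step E S = S" by (simp add: cr_step_def)

context
  fixes V E
  assumes cw: "cop_win V E"
begin

definition "m0 = (LEAST k. is_clique E (remaining V E k))"

lemma m0_clique: "is_clique E (remaining V E m0)"
  using cw unfolding cop_win_def m0_def by (meson LeastI_ex)

lemma m0_not: "k < m0 \<Longrightarrow> \<not> is_clique E (remaining V E k)"
  unfolding m0_def by (rule not_less_Least)

lemma cr_eq: "corner_rank V E = Suc m0"
  by (simp add: corner_rank_def m0_def)

lemma sc_ne: assumes "k < m0" shows "strict_corners E (remaining V E k) \<noteq> {}"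
proof
  assume h: "strict_corners E (remaining V E k) = {}"
  hence "cr_step E (remaining V E k) = remaining V E k" by (simp add: cr_step_def)
  from rem_stat[OF this, of "m0 - k"] have "remaining V E m0 = remaining V E k" using assms by simp
  thus False using m0_clique m0_not[OF assms] by simp
qed

lemma rem_step: "k < m0 \<Longrightarrow> remaining V E (Suc k) = remaining V E k - strict_corners E (remaining V E k)"
  using m0_not sc_ne by (simp add: rem_Suc cr_step_def)

lemma rank_set_lt: "1 \<le> i \<Longrightarrow> i < corner_rank V E \<Longrightarrow> rank_set V E i = strict_corners E (remaining V E (i - 1))"
  by (simp add: rank_set_def)

lemma rank_set_top: "rank_set V E (corner_rank V E) = remaining V E m0"
  by (simp add: rank_set_def cr_eq)

end

lemma rev_upt_nth: "1 \<le> i \<Longrightarrow> i \<le> b \<Longrightarrow> rev [1..<Suc b] ! (b - i) = i"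
proof -
  assume a: "1 \<le> i" "i \<le> b"
  have "rev [1..<Suc b] ! (b - i) = [1..<Suc b] ! (length [1..<Suc b] - Suc (b - i))"
    by (rule rev_nth) (use a in simp)
  also have "length [1..<Suc b] - Suc (b - i) = i - 1" using a by simp
  also have "[1..<Suc b] ! (i - 1) = 1 + (i - 1)" by (rule nth_upt) (use a in simp)
  finally show ?thesis using a by simp
qed

lemma rcv_nth:
  assumes "rank_card_vector V E = xs"
  shows "length xs = corner_rank V E \<and>
    (\<forall>i. 1 \<le> i \<and> i \<le> corner_rank V E \<longrightarrow> card (rank_set V E i) = xs ! (corner_rank V E - i))"
proof -
  have "length xs = corner_rank V E" using assms by (auto simp: rank_card_vector_def)
  moreover have "card (rank_set V E i) = xs ! (corner_rank V E - i)"
    if "1 \<le> i" "i \<le> corner_rank V E" for i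
  proof -
    have "xs ! (corner_rank V E - i) = card (rank_set V E (rev [1..<Suc (corner_rank V E)] ! (corner_rank V E - i)))"
    proof -
      have "xs = map (\<lambda>k. card (rank_set V E k)) (rev [1..<Suc (corner_rank V E)])"
        using assms unfolding rank_card_vector_def by simp
      moreover have "corner_rank V E - i < length (rev [1..<Suc (corner_rank V E)])" using that by simp
      ultimately show ?thesis by (simp only: nth_map)
    qed
    thus ?thesis using rev_upt_nth[OF that] by simp
  qed
  ultimately show ?thesis by blast
qed

definition Inv :: "('a\<times>'a) set \<Rightarrow> 'a set \<Rightarrow> int \<Rightarrow> int \<Rightarrow> int \<Rightarrow> ('a \<Rightarrow> int) \<Rightarrow> bool" where
"Inv E S lo hi J pos \<longleftrightarrow> (\<forall>v\<in>S. lo \<le> pos v \<and> pos v \<le> hi) \<and>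
   (\<forall>i. lo \<le> i \<and> i \<le> hi \<longrightarrow> card {v\<in>S. pos v = i} = (if i = J then 2 else 1)) \<and>
   (\<forall>u\<in>S. \<forall>v\<in>S. (u,v) \<in> E \<longleftrightarrow> \<bar>pos u - pos v\<bar> \<le> 1)"

lemma Inv_range: "Inv E S lo hi J pos \<Longrightarrow> v \<in> S \<Longrightarrow> lo \<le> pos v \<and> pos v \<le> hi"
  by (simp add: Inv_def)

lemma Inv_card: "Inv E S lo hi J pos \<Longrightarrow> lo \<le> i \<Longrightarrow> i \<le> hi \<Longrightarrow> card {v\<in>S. pos v = i} = (if i = J then 2 else 1)"
  by (simp add: Inv_def)

lemma Inv_adj: "Inv E S lo hi J pos \<Longrightarrow> u \<in> S \<Longrightarrow> v \<in> S \<Longrightarrow> (u,v) \<in> E \<longleftrightarrow> \<bar>pos u - pos v\<bar> \<le> 1"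
  by (simp add: Inv_def)

lemma Inv_fiber_ne: assumes "Inv E S lo hi J pos" "lo \<le> i" "i \<le> hi" shows "\<exists>v\<in>S. pos v = i"
proof -
  have "card {v\<in>S. pos v = i} \<noteq> 0" using Inv_card[OF assms] by simp
  hence "{v\<in>S. pos v = i} \<noteq> {}" by (intro notI) simp
  thus ?thesis by blast
qed

lemma Inv_fiber_fin: assumes "Inv E S lo hi J pos" "lo \<le> i" "i \<le> hi" shows "finite {v\<in>S. pos v = i}"
proof -
  have "card {v\<in>S. pos v = i} \<noteq> 0" using Inv_card[OF assms] by simp
  thus ?thesis by (rule card_ge_0_finite[OF neq0_conv[THEN iffD1]])
qed

lemma Inv_single: assumes "Inv E S lo hi J pos" "lo \<le> i" "i \<le> hi" "i \<noteq> J"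
  shows "\<exists>v. {w\<in>S. pos w = i} = {v}"
proof -
  have "card {w\<in>S. pos w = i} = 1" using Inv_card[OF assms(1-3)] assms(4) by simp
  then obtain x where "{w\<in>S. pos w = i} = {x}" by (rule card_1_singletonE)
  thus ?thesis by (intro exI)
qed

lemma Inv_nbh: "Inv E S lo hi J pos \<Longrightarrow> v \<in> S \<Longrightarrow> nbh E S v = {w\<in>S. \<bar>pos v - pos w\<bar> \<le> 1}"
  unfolding nbh_def using Inv_adj[of E S lo hi J pos v] by blast

lemma Inv_iso:
  assumes I1: "Inv E1 V1 lo hi J pos1" and I2: "Inv E2 V2 lo hi J pos2"
    and E1: "E1 \<subseteq> V1 \<times> V1" and E2: "E2 \<subseteq> V2 \<times> V2"
  shows "graph_iso V1 E1 V2 E2"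
proof -
  define F1 where "F1 i = {v\<in>V1. pos1 v = i}" for i
  define F2 where "F2 i = {v\<in>V2. pos2 v = i}" for i
  have ex: "\<forall>i\<in>{lo..hi}. \<exists>g. bij_betw g (F1 i) (F2 i)"
  proof
    fix i assume i: "i \<in> {lo..hi}"
    have i': "lo \<le> i" "i \<le> hi" using i by auto
    have "finite (F1 i)" unfolding F1_def by (rule Inv_fiber_fin[OF I1 i'])
    moreover have "finite (F2 i)" unfolding F2_def by (rule Inv_fiber_fin[OF I2 i'])
    moreover have "card (F1 i) = card (F2 i)" unfolding F1_def F2_def
      using Inv_card[OF I1 i'] Inv_card[OF I2 i'] by simp
    ultimately
    show "\<exists>g. bij_betw g (F1 i) (F2 i)" by (rule finite_same_card_bij)
  qed
  obtain g where g0: "\<forall>i\<in>{lo..hi}. bij_betw (g i) (F1 i) (F2 i)" using bchoice[OF ex] by blast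
  hence g: "\<And>i. i \<in> {lo..hi} \<Longrightarrow> bij_betw (g i) (F1 i) (F2 i)" by blast
  define f where "f v = g (pos1 v) v" for v
  have fmem: "f v \<in> V2 \<and> pos2 (f v) = pos1 v" if "v \<in> V1" for v
  proof -
    have "pos1 v \<in> {lo..hi}" using Inv_range[OF I1 that] by simp
    hence b: "bij_betw (g (pos1 v)) (F1 (pos1 v)) (F2 (pos1 v))" by (rule g)
    have "v \<in> F1 (pos1 v)" using that by (simp add: F1_def)
    hence "g (pos1 v) v \<in> F2 (pos1 v)" using bij_betw_apply[OF b] by blast
    thus ?thesis by (simp add: f_def F2_def)
  qed
  have "bij_betw f V1 V2"
  proof (rule bij_betwI')
    fix x y assume xy: "x \<in> V1" "y \<in> V1"
    show "(f x = f y) = (x = y)"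
    proof
      assume "f x = f y"
      hence p: "pos1 x = pos1 y" using fmem xy by metis
      have "pos1 x \<in> {lo..hi}" using Inv_range[OF I1 xy(1)] by simp
      hence "inj_on (g (pos1 x)) (F1 (pos1 x))" using g bij_betw_def by blast
      moreover have "x \<in> F1 (pos1 x)" "y \<in> F1 (pos1 x)" using xy p by (auto simp: F1_def)
      ultimately show "x = y" using \<open>f x = f y\<close> p by (simp add: f_def inj_on_def)
    qed simp
  next
    fix x assume "x \<in> V1" thus "f x \<in> V2" using fmem by blast
  next
    fix y assume y: "y \<in> V2"
    have i: "pos2 y \<in> {lo..hi}" using Inv_range[OF I2 y] by simp
    have "y \<in> F2 (pos2 y)" using y by (simp add: F2_def)
    then obtain x where x: "x \<in> F1 (pos2 y)" "g (pos2 y) x = y"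
      using g[OF i] by (metis bij_betw_def imageE)
    have "x \<in> V1" "pos1 x = pos2 y" using x(1) by (auto simp: F1_def)
    thus "\<exists>x\<in>V1. y = f x" using x(2) unfolding f_def by metis
  qed
  moreover have "\<forall>u\<in>V1. \<forall>v\<in>V1. (u, v) \<in> E1 \<longleftrightarrow> (f u, f v) \<in> E2"
  proof (intro ballI)
    fix u v assume uv: "u \<in> V1" "v \<in> V1"
    have "(u, v) \<in> E1 \<longleftrightarrow> \<bar>pos1 u - pos1 v\<bar> \<le> 1" by (rule Inv_adj[OF I1 uv])
    also have "\<dots> \<longleftrightarrow> (f u, f v) \<in> E2" using Inv_adj[OF I2, of "f u" "f v"] fmem[OF uv(1)] fmem[OF uv(2)] by simp
    finally show "(u, v) \<in> E1 \<longleftrightarrow> (f u, f v) \<in> E2" .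
  qed
  ultimately show ?thesis unfolding graph_iso_def by blast
qed

lemma Inv_sc:
  assumes I: "Inv E S lo hi J pos" and wd: "lo + 2 \<le> hi"
  shows "strict_corners E S = {v\<in>S. pos v = lo \<or> pos v = hi}"
proof (intro equalityI subsetI)
  fix v assume v: "v \<in> strict_corners E S"
  then obtain w where w: "w \<in> S" "w \<noteq> v" "nbh E S v \<subset> nbh E S w" by (auto simp: sc_mem)
  have vS: "v \<in> S" using v by (simp add: sc_mem)
  show "v \<in> {v\<in>S. pos v = lo \<or> pos v = hi}"
  proof (rule ccontr)
    assume "v \<notin> {v\<in>S. pos v = lo \<or> pos v = hi}"
    hence r: "lo < pos v" "pos v < hi" using Inv_range[OF I vS] vS by auto
    obtain u1 where u1: "u1 \<in> S" "pos u1 = pos v - 1" using Inv_fiber_ne[OF I, of "pos v - 1"] r by auto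
    obtain u2 where u2: "u2 \<in> S" "pos u2 = pos v + 1" using Inv_fiber_ne[OF I, of "pos v + 1"] r by auto
    have "u1 \<in> nbh E S v" "u2 \<in> nbh E S v" using u1 u2 vS Inv_adj[OF I] by auto
    hence "u1 \<in> nbh E S w" "u2 \<in> nbh E S w" using w(3) by blast+
    hence "(w,u1) \<in> E" "(w,u2) \<in> E" by auto
    hence "\<bar>pos w - pos u1\<bar> \<le> 1" "\<bar>pos w - pos u2\<bar> \<le> 1" using u1 u2 w(1) Inv_adj[OF I] by auto
    hence "pos w = pos v" using u1 u2 by linarith
    hence "nbh E S w = nbh E S v" using Inv_nbh[OF I] w(1) vS by simp
    thus False using w(3) by simp
  qed
next
  fix v assume v: "v \<in> {v\<in>S. pos v = lo \<or> pos v = hi}"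
  hence vS: "v \<in> S" by simp
  show "v \<in> strict_corners E S"
  proof (cases "pos v = lo")
    case True
    obtain w where w: "w \<in> S" "pos w = lo + 1" using Inv_fiber_ne[OF I, of "lo+1"] wd by auto
    obtain u where u: "u \<in> S" "pos u = lo + 2" using Inv_fiber_ne[OF I, of "lo+2"] wd by auto
    have "nbh E S v \<subseteq> nbh E S w"
      using Inv_nbh[OF I] vS w True Inv_range[OF I] by auto
    moreover have "u \<in> nbh E S w" "u \<notin> nbh E S v" using Inv_nbh[OF I] vS w u True by auto
    ultimately have "nbh E S v \<subset> nbh E S w" by blast
    moreover have "w \<noteq> v" using w True by auto
    ultimately show ?thesis using vS w(1) by (auto simp: sc_mem)
  next
    case False
    hence T: "pos v = hi" using v by simp
    obtain w where w: "w \<in> S" "pos w = hi - 1" using Inv_fiber_ne[OF I, of "hi - 1"] assms by auto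
    obtain u where u: "u \<in> S" "pos u = hi - 2" using Inv_fiber_ne[OF I, of "hi - 2"] assms by auto
    have "nbh E S v \<subseteq> nbh E S w"
      using Inv_nbh[OF I] vS w T Inv_range[OF I] by auto
    moreover have "u \<in> nbh E S w" "u \<notin> nbh E S v" using Inv_nbh[OF I] vS w u T by auto
    ultimately have "nbh E S v \<subset> nbh E S w" by blast
    moreover have "w \<noteq> v" using w T by auto
    ultimately show ?thesis using vS w(1) by (auto simp: sc_mem)
  qed
qed

lemma Inv_clique: "Inv E S lo hi J pos \<Longrightarrow> hi \<le> lo + 1 \<Longrightarrow> is_clique E S"
  unfolding is_clique_def by (smt (verit) Inv_adj Inv_range)

lemma Inv_not_clique: assumes I: "Inv E S lo hi J pos" "lo + 2 \<le> hi" shows "\<not> is_clique E S"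
proof -
  obtain u where u: "u \<in> S" "pos u = lo" using Inv_fiber_ne[OF I(1), of lo] I by auto
  obtain w where w: "w \<in> S" "pos w = lo + 2" using Inv_fiber_ne[OF I(1), of "lo+2"] I by auto
  have "(u,w) \<notin> E" using Inv_adj[OF I(1) u(1) w(1)] u w by simp
  thus ?thesis using u w unfolding is_clique_def by blast
qed

lemma Inv_shrink:
  assumes I: "Inv E S lo hi J pos"
  shows "Inv E {v\<in>S. lo < pos v \<and> pos v < hi} (lo+1) (hi-1) J pos"
proof -
  have "{v\<in>{v\<in>S. lo < pos v \<and> pos v < hi}. pos v = i} = {v\<in>S. pos v = i}" if "lo+1 \<le> i" "i \<le> hi - 1" for i
    using that by auto
  thus ?thesis using I unfolding Inv_def by auto
qed

lemma Inv_sub: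
  assumes I: "Inv E V lo0 hi0 J pos" "lo0 \<le> lo" "hi \<le> hi0"
  shows "Inv E {v\<in>V. lo \<le> pos v \<and> pos v \<le> hi} lo hi J pos"
proof -
  have "{v\<in>{v\<in>V. lo \<le> pos v \<and> pos v \<le> hi}. pos v = i} = {v\<in>V. pos v = i}" if "lo \<le> i" "i \<le> hi" for i
    using that by auto
  thus ?thesis using I unfolding Inv_def by auto
qed

lemma fwd_rem:
  assumes I: "Inv E V 1 n J pos"
  shows "2 * int k + 1 \<le> n \<Longrightarrow> remaining V E k = {v\<in>V. int k + 1 \<le> pos v \<and> pos v \<le> n - int k}"
proof (induction k)
  case 0
  have "\<forall>v\<in>V. 1 \<le> pos v \<and> pos v \<le> n" using Inv_range[OF I] by blast
  thus ?case unfolding rem_0 by auto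
next
  case (Suc k)
  define S where "S = {v\<in>V. int k + 1 \<le> pos v \<and> pos v \<le> n - int k}"
  have R: "remaining V E k = S" using Suc by (simp add: S_def)
  have IS: "Inv E S (int k + 1) (n - int k) J pos" unfolding S_def by (rule Inv_sub[OF I]) auto
  have w: "int k + 1 + 2 \<le> n - int k" using Suc.prems by simp
  have nc: "\<not> is_clique E S" by (rule Inv_not_clique[OF IS w])
  have sc: "strict_corners E S = {v\<in>S. pos v = int k + 1 \<or> pos v = n - int k}" by (rule Inv_sc[OF IS w])
  have "sc_ne": "strict_corners E S \<noteq> {}"
  proof -
    obtain v where "v \<in> S" "pos v = int k + 1" using Inv_fiber_ne[OF IS, of "int k + 1"] w by auto
    thus ?thesis using sc by auto
  qed
  have "remaining V E (Suc k) = S - strict_corners E S"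
    using nc sc_ne by (simp add: rem_Suc R cr_step_def)
  also have "\<dots> = {v\<in>V. int k + 2 \<le> pos v \<and> pos v \<le> n - int k - 1}"
    unfolding sc unfolding S_def by (rule set_eqI) auto
  also have "\<dots> = {v\<in>V. int (Suc k) + 1 \<le> pos v \<and> pos v \<le> n - int (Suc k)}"
    by (rule Collect_cong) auto
  finally show ?case .
qed

lemma card_two_fibers:
  assumes I: "Inv E S lo hi J pos" "lo \<le> a" "a < b" "b \<le> hi"
  shows "card {v\<in>S. pos v = a \<or> pos v = b} = card {v\<in>S. pos v = a} + card {v\<in>S. pos v = b}"
proof -
  have "{v\<in>S. pos v = a \<or> pos v = b} = {v\<in>S. pos v = a} \<union> {v\<in>S. pos v = b}" by auto
  moreover have "finite {v\<in>S. pos v = a}" by (rule Inv_fiber_fin[OF I(1)]) (use I in auto)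
  moreover have "finite {v\<in>S. pos v = b}" by (rule Inv_fiber_fin[OF I(1)]) (use I in auto)
  moreover have "{v\<in>S. pos v = a} \<inter> {v\<in>S. pos v = b} = {}" using I(3) by auto
  ultimately show ?thesis by (simp add: card_Un_disjoint)
qed

lemma fwd_data:
  assumes I: "Inv E V 1 n J pos" and n: "3 \<le> n"
  defines "m \<equiv> nat ((n - 1) div 2)"
  shows "cop_win V E" "corner_rank V E = Suc m"
    "\<And>i. 1 \<le> i \<Longrightarrow> i \<le> m \<Longrightarrow> rank_set V E i = {v\<in>V. pos v = int i \<or> pos v = n + 1 - int i}"
    "remaining V E m = {v\<in>V. int m + 1 \<le> pos v \<and> pos v \<le> n - int m}"
    "m \<ge> 1 \<Longrightarrow> remaining V E (m - 1) = {v\<in>V. int m \<le> pos v \<and> pos v \<le> n + 1 - int m}"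
proof -
  have m1: "2 * int m + 1 \<le> n" "n \<le> 2 * int m + 2" unfolding m_def using n by auto
  have Rm: "remaining V E m = {v\<in>V. int m + 1 \<le> pos v \<and> pos v \<le> n - int m}"
    by (rule fwd_rem[OF I m1(1)])
  show "remaining V E m = {v\<in>V. int m + 1 \<le> pos v \<and> pos v \<le> n - int m}" by (rule Rm)
  have ISm: "Inv E (remaining V E m) (int m + 1) (n - int m) J pos"
    unfolding Rm by (rule Inv_sub[OF I]) auto
  have cl: "is_clique E (remaining V E m)" by (rule Inv_clique[OF ISm]) (use m1 in simp)
  thus cw: "cop_win V E" unfolding cop_win_def by blast
  have ncl: "\<not> is_clique E (remaining V E k)" if "k < m" for k
  proof -
    have "2 * int k + 1 \<le> n" using that m1 by simp
    hence Rk: "remaining V E k = {v\<in>V. int k + 1 \<le> pos v \<and> pos v \<le> n - int k}" by (rule fwd_rem[OF I])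
    have "Inv E (remaining V E k) (int k + 1) (n - int k) J pos"
      unfolding Rk by (rule Inv_sub[OF I]) auto
    thus ?thesis by (rule Inv_not_clique) (use that m1 in simp)
  qed
  have "(LEAST k. is_clique E (remaining V E k)) = m"
    by (rule Least_equality) (use cl ncl in \<open>auto simp: not_less[symmetric]\<close>)
  thus cr: "corner_rank V E = Suc m" by (simp add: corner_rank_def)
  show "remaining V E (m - 1) = {v\<in>V. int m \<le> pos v \<and> pos v \<le> n + 1 - int m}" if "m \<ge> 1"
  proof -
    have "2 * int (m - 1) + 1 \<le> n" using that m1 by simp
    from fwd_rem[OF I this] have R: "remaining V E (m - 1) = {v\<in>V. int (m - 1) + 1 \<le> pos v \<and> pos v \<le> n - int (m - 1)}" .
    have e: "int (m - 1) + 1 = int m" "n - int (m - 1) = n + 1 - int m" using that by auto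
    show ?thesis unfolding R e by (rule refl)
  qed
  fix i assume i: "1 \<le> i" "i \<le> m"
  have "2 * int (i - 1) + 1 \<le> n" using i m1 by simp
  from fwd_rem[OF I this] have R: "remaining V E (i - 1) = {v\<in>V. int (i - 1) + 1 \<le> pos v \<and> pos v \<le> n - int (i - 1)}" .
  have e: "int (i - 1) + 1 = int i" "n - int (i - 1) = n + 1 - int i" using i by auto
  have Ri: "remaining V E (i - 1) = {v\<in>V. int i \<le> pos v \<and> pos v \<le> n + 1 - int i}"
    unfolding R e by (rule refl)
  have ISi: "Inv E (remaining V E (i - 1)) (int i) (n + 1 - int i) J pos"
    unfolding Ri by (rule Inv_sub[OF I]) (use i in auto)
  have "rank_set V E i = strict_corners E (remaining V E (i - 1))"
    using i cr by (simp add: rank_set_def)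
  also have "\<dots> = {v\<in>remaining V E (i - 1). pos v = int i \<or> pos v = n + 1 - int i}"
    by (rule Inv_sc[OF ISi]) (use i m1 in simp)
  also have "\<dots> = {v\<in>V. pos v = int i \<or> pos v = n + 1 - int i}"
    unfolding Ri using i m1 by auto
  finally show "rank_set V E i = {v\<in>V. pos v = int i \<or> pos v = n + 1 - int i}" .
qed

definition cpos :: "nat \<Rightarrow> nat \<Rightarrow> int" where "cpos j v = (if v = 0 then int j else int v)"
definition cE :: "nat \<Rightarrow> nat \<Rightarrow> (nat \<times> nat) set" where
  "cE n j = {(u,v). u \<le> n \<and> v \<le> n \<and> \<bar>cpos j u - cpos j v\<bar> \<le> 1}"

lemma can_Inv:
  assumes "1 \<le> j" "j \<le> n"
  shows "Inv (cE n j) {0..n} 1 (int n) (int j) (cpos j)"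
proof -
  have f: "card {v\<in>{0..n}. cpos j v = i} = (if i = int j then 2 else 1)" if i: "1 \<le> i" "i \<le> int n" for i
  proof (cases "i = int j")
    case True
    have "{v\<in>{0..n}. cpos j v = i} = {0, j}" using True assms by (auto simp: cpos_def)
    thus ?thesis using True assms by simp
  next
    case False
    have "{v\<in>{0..n}. cpos j v = i} = {nat i}" using False assms i by (auto simp: cpos_def)
    thus ?thesis using False by simp
  qed
  show ?thesis unfolding Inv_def using f assms by (auto simp: cpos_def cE_def)
qed

lemma can_graph: "graph {0..n} (cE n j)"
  unfolding graph_def cE_def sym_def by auto

lemma rev_upt_Suc_top: "rev [1..<Suc (Suc a)] = Suc a # rev [1..<Suc a]"
  by simp

lemma exist1:
  assumes a: "\<alpha> \<ge> 2" "1 < j" "j \<le> \<alpha>" "x j = 3" "\<forall>i\<in>{1..\<alpha>}. i \<noteq> j \<longrightarrow> x i = 2"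
  shows "realizes {0..2*\<alpha>+1} (cE (2*\<alpha>+1) j) (1 # vec_of \<alpha> x)"
proof -
  define V where "V = {0..2*\<alpha>+1}"
  define E where "E = cE (2*\<alpha>+1) j"
  define n where "n = int (2*\<alpha>+1)"
  have I: "Inv E V 1 n (int j) (cpos j)" unfolding V_def E_def n_def by (rule can_Inv) (use a in auto)
  have n3: "3 \<le> n" using a by (simp add: n_def)
  have m: "nat ((n - 1) div 2) = \<alpha>" by (simp add: n_def)
  note fd = fwd_data[OF I n3, unfolded m]
  have cr: "corner_rank V E = Suc \<alpha>" by (rule fd(2))
  have top: "card (rank_set V E (Suc \<alpha>)) = 1"
  proof -
    have "rank_set V E (Suc \<alpha>) = remaining V E \<alpha>" by (simp add: rank_set_def cr)
    also have "\<dots> = {v\<in>V. cpos j v = int \<alpha> + 1}" unfolding fd(4) by (auto simp: n_def)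
    finally have "rank_set V E (Suc \<alpha>) = {v\<in>V. cpos j v = int \<alpha> + 1}" .
    moreover have "card {v\<in>V. cpos j v = int \<alpha> + 1} = 1"
      using Inv_card[OF I, of "int \<alpha> + 1"] a by (simp add: n_def)
    ultimately show ?thesis by simp
  qed
  have lev: "card (rank_set V E i) = x i" if i: "i \<in> {1..\<alpha>}" for i
  proof -
    have e: "rank_set V E i = {v\<in>V. cpos j v = int i \<or> cpos j v = n + 1 - int i}"
      by (rule fd(3)) (use i in auto)
    have "card (rank_set V E i) = card {v\<in>V. cpos j v = int i} + card {v\<in>V. cpos j v = n + 1 - int i}"
      unfolding e using i by (intro card_two_fibers[OF I]) (auto simp: n_def)
    also have "\<dots> = (if int i = int j then 2 else 1) + 1"
      using Inv_card[OF I, of "int i"] Inv_card[OF I, of "n + 1 - int i"] i a by (auto simp: n_def)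
    also have "\<dots> = x i" using a i by auto
    finally show ?thesis .
  qed
  have "rank_card_vector V E = map (\<lambda>k. card (rank_set V E k)) (rev [1..<Suc (Suc \<alpha>)])"
    by (simp add: rank_card_vector_def cr)
  also have "\<dots> = 1 # map (\<lambda>k. card (rank_set V E k)) (rev [1..<Suc \<alpha>])"
    unfolding rev_upt_Suc_top using top by simp
  also have "map (\<lambda>k. card (rank_set V E k)) (rev [1..<Suc \<alpha>]) = map x (rev [1..<Suc \<alpha>])"
    by (rule map_cong) (use lev in auto)
  finally have "rank_card_vector V E = 1 # vec_of \<alpha> x" by (simp add: vec_of_def)
  thus ?thesis unfolding realizes_def using can_graph fd(1) by (simp add: V_def E_def)
qed

lemma exist0:
  assumes a: "\<alpha> \<ge> 2" "1 < j" "j \<le> \<alpha>" "x j = 3" "\<forall>i\<in>{1..\<alpha>}. i \<noteq> j \<longrightarrow> x i = 2"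
  shows "zero_realizes {0..2*\<alpha>} (cE (2*\<alpha>) j) (vec_of \<alpha> x)"
proof -
  define V where "V = {0..2*\<alpha>}"
  define E where "E = cE (2*\<alpha>) j"
  define n where "n = int (2*\<alpha>)"
  have I: "Inv E V 1 n (int j) (cpos j)" unfolding V_def E_def n_def by (rule can_Inv) (use a in auto)
  have n3: "3 \<le> n" using a by (simp add: n_def)
  have m: "nat ((n - 1) div 2) = \<alpha> - 1" using a by (simp add: n_def)
  note fd = fwd_data[OF I n3, unfolded m]
  have cr: "corner_rank V E = \<alpha>" using fd(2) a by simp
  have Rtop: "remaining V E (\<alpha> - 1) = {v\<in>V. int \<alpha> \<le> cpos j v \<and> cpos j v \<le> int \<alpha> + 1}"
    unfolding fd(4) using a by (auto simp: n_def)
  have top: "card (rank_set V E \<alpha>) = x \<alpha>"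
  proof -
    have "rank_set V E \<alpha> = remaining V E (\<alpha> - 1)" using a by (simp add: rank_set_def cr)
    also have "\<dots> = {v\<in>V. cpos j v = int \<alpha> \<or> cpos j v = int \<alpha> + 1}" unfolding Rtop by auto
    finally have e: "rank_set V E \<alpha> = {v\<in>V. cpos j v = int \<alpha> \<or> cpos j v = int \<alpha> + 1}" .
    have "card {v\<in>V. cpos j v = int \<alpha> \<or> cpos j v = int \<alpha> + 1} =
      card {v\<in>V. cpos j v = int \<alpha>} + card {v\<in>V. cpos j v = int \<alpha> + 1}"
      by (rule card_two_fibers[OF I]) (use a in \<open>auto simp: n_def\<close>)
    also have "\<dots> = (if int \<alpha> = int j then 2 else 1) + 1"
      using Inv_card[OF I, of "int \<alpha>"] Inv_card[OF I, of "int \<alpha> + 1"] a by (auto simp: n_def)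
    also have "\<dots> = x \<alpha>" using a by auto
    finally show ?thesis using e by simp
  qed
  have lev: "card (rank_set V E i) = x i" if i: "i \<in> {1..\<alpha>}" for i
  proof (cases "i = \<alpha>")
    case True thus ?thesis using top by simp
  next
    case False
    hence i': "1 \<le> i" "i \<le> \<alpha> - 1" using i by auto
    have "card (rank_set V E i) = card {v\<in>V. cpos j v = int i} + card {v\<in>V. cpos j v = n + 1 - int i}"
      unfolding fd(3)[OF i'] using i' a by (intro card_two_fibers[OF I]) (auto simp: n_def)
    also have "\<dots> = (if int i = int j then 2 else 1) + 1"
      using Inv_card[OF I, of "int i"] Inv_card[OF I, of "n + 1 - int i"] i' a by (auto simp: n_def)
    also have "\<dots> = x i" using a i by auto
    finally show ?thesis .
  qed
  have "rank_card_vector V E = map (\<lambda>k. card (rank_set V E k)) (rev [1..<Suc \<alpha>])"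
    by (simp add: rank_card_vector_def cr)
  also have "\<dots> = map x (rev [1..<Suc \<alpha>])"
    by (rule map_cong) (use lev in auto)
  finally have rv: "rank_card_vector V E = vec_of \<alpha> x" by (simp add: vec_of_def)
  have "\<not> type1 V E"
  proof
    assume "type1 V E"
    then obtain v where v: "v \<in> rank_set V E \<alpha>" "\<forall>u\<in>remaining V E (\<alpha> - 2). (v, u) \<in> E"
      unfolding type1_def cr by blast
    have R2: "remaining V E (\<alpha> - 2) = {v\<in>V. int \<alpha> - 1 \<le> cpos j v \<and> cpos j v \<le> int \<alpha> + 2}"
    proof -
      have "remaining V E (\<alpha> - 1 - 1) = {v\<in>V. int (\<alpha> - 1) \<le> cpos j v \<and> cpos j v \<le> n + 1 - int (\<alpha> - 1)}"
        by (rule fd(5)) (use a in simp)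
      moreover have "\<alpha> - 1 - 1 = \<alpha> - 2" "int (\<alpha> - 1) = int \<alpha> - 1" "n + 1 - int (\<alpha> - 1) = int \<alpha> + 2"
        using a by (auto simp: n_def)
      ultimately show ?thesis by (simp add: add.commute)
    qed
    have vV: "v \<in> V" and pv: "cpos j v = int \<alpha> \<or> cpos j v = int \<alpha> + 1"
      using v(1) a rem_sub unfolding rank_set_def cr Rtop by auto
    show False
    proof (cases "cpos j v = int \<alpha>")
      case True
      obtain u where u: "u \<in> V" "cpos j u = int \<alpha> + 2"
        using Inv_fiber_ne[OF I, of "int \<alpha> + 2"] a by (auto simp: n_def)
      have "u \<in> remaining V E (\<alpha> - 2)" unfolding R2 using u by simp
      hence "(v,u) \<in> E" using v(2) by blast
      thus False using Inv_adj[OF I vV u(1)] True u(2) by simp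
    next
      case False
      hence F: "cpos j v = int \<alpha> + 1" using pv by simp
      obtain u where u: "u \<in> V" "cpos j u = int \<alpha> - 1"
        using Inv_fiber_ne[OF I, of "int \<alpha> - 1"] a by (auto simp: n_def)
      have "u \<in> remaining V E (\<alpha> - 2)" unfolding R2 using u by simp
      hence "(v,u) \<in> E" using v(2) by blast
      thus False using Inv_adj[OF I vV u(1)] F u(2) by simp
    qed
  qed
  hence "type0 V E" unfolding type0_def cr using a by simp
  thus ?thesis unfolding zero_realizes_def realizes_def using can_graph fd(1) rv by (simp add: V_def E_def)
qed

lemma symE_iff: "sym E \<Longrightarrow> (a,b) \<in> E \<longleftrightarrow> (b,a) \<in> E"
  by (auto dest: symD)

lemma card2_eq: assumes "finite X" "card X \<le> 2" "a \<in> X" "b \<in> X" "a \<noteq> b" shows "X = {a,b}"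
proof -
  have "{a,b} \<subseteq> X" using assms by auto
  moreover have "card {a,b} = 2" using assms by simp
  ultimately show ?thesis using assms by (metis card_seteq)
qed

lemma step1core:
  assumes symE: "sym E" and refl: "\<forall>v\<in>S. (v,v) \<in> E" and fin: "finite S"
    and S': "S' = S - strict_corners E S"
    and p: "p \<in> S'" and q: "q \<in> S'" and pq: "p \<noteq> q" "(p,q) \<notin> E"
    and Np: "nbh E S' p = insert p P" and Nq: "nbh E S' q = insert q Q"
    and Pd: "\<forall>w\<in>P. w \<noteq> p \<and> nbh E S' p \<subset> nbh E S' w"
    and Qd: "\<forall>w\<in>Q. w \<noteq> q \<and> nbh E S' q \<subset> nbh E S' w"
    and Pne: "P \<noteq> {}" and Qne: "Q \<noteq> {}"
    and PQ: "\<forall>w\<in>P\<inter>Q. P = {w} \<and> Q = {w}"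
    and card: "card (strict_corners E S) \<le> 2"
  shows "\<exists>a b. strict_corners E S = {a,b} \<and> a \<noteq> b \<and> nbh E S a = {a,p} \<and> nbh E S b = {b,q}"
proof -
  define X where "X = strict_corners E S"
  have XS: "X \<subseteq> S" by (auto simp: X_def sc_mem)
  have S'S: "S' \<subseteq> S" using S' by auto
  have SX: "S - S' = X" using S' XS X_def by auto
  have pS: "p \<in> S" "p \<notin> X" using p S' X_def by auto
  have qS: "q \<in> S" "q \<notin> X" using q S' X_def by auto
  have sE: "\<And>a b. (a,b) \<in> E \<Longrightarrow> (b,a) \<in> E" using symE by (auto dest: symD)
  have PS: "P \<subseteq> S'" using Np by (metis insert_subset nbh_sub)
  have QS: "Q \<subseteq> S'" using Nq by (metis insert_subset nbh_sub)
  have privP: "\<exists>x\<in>X. (p,x) \<in> E \<and> (w,x) \<notin> E" if "w \<in> P" for w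
  proof -
    have w: "w \<in> S'" "w \<noteq> p" "nbh E S' p \<subset> nbh E S' w" using that PS Pd by auto
    obtain x where "x \<in> S - S'" "(p,x) \<in> E" "(w,x) \<notin> E"
      using priv_child[OF S'S p w(1) w(2) pS(2)[unfolded X_def] w(3)] by blast
    thus ?thesis using SX by blast
  qed
  have privQ: "\<exists>x\<in>X. (q,x) \<in> E \<and> (w,x) \<notin> E" if "w \<in> Q" for w
  proof -
    have w: "w \<in> S'" "w \<noteq> q" "nbh E S' q \<subset> nbh E S' w" using that QS Qd by auto
    obtain x where "x \<in> S - S'" "(q,x) \<in> E" "(w,x) \<notin> E"
      using priv_child[OF S'S q w(1) w(2) qS(2)[unfolded X_def] w(3)] by blast
    thus ?thesis using SX by blast
  qed
  have domX: "\<exists>w\<in>S'. nbh E S x \<subset> nbh E S w" if xX: "x \<in> X" for x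
  proof -
    obtain w where "w \<in> S - strict_corners E S" "nbh E S x \<subset> nbh E S w"
      using dom_exists[OF fin xX[unfolded X_def]] by blast
    thus ?thesis using S' by blast
  qed
  have A: "(q,x) \<notin> E" if x: "x \<in> X" "(p,x) \<in> E" "w0 \<in> P" "(w0,x) \<notin> E" for x w0
  proof
    assume qx: "(q,x) \<in> E"
    obtain w where w: "w \<in> S'" "nbh E S x \<subset> nbh E S w" using domX[OF x(1)] by blast
    have "p \<in> nbh E S x" "q \<in> nbh E S x" "x \<in> nbh E S x" using x qx pS qS XS refl sE by auto
    hence "p \<in> nbh E S w" "q \<in> nbh E S w" "x \<in> nbh E S w" using w(2) by blast+
    hence wp: "(w,p) \<in> E" "(w,q) \<in> E" "(w,x) \<in> E" by auto
    have "w \<in> insert p P" unfolding Np[symmetric] using w(1) wp(1) sE by auto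
    moreover have "w \<in> insert q Q" unfolding Nq[symmetric] using w(1) wp(2) sE by auto
    moreover have "w \<noteq> p" using wp(2) pq by auto
    moreover have "w \<noteq> q" using wp(1) pq sE by auto
    ultimately have "w \<in> P \<inter> Q" by auto
    hence "P = {w}" using PQ by blast
    hence "w0 = w" using x(3) by auto
    thus False using wp(3) x(4) by simp
  qed
  have B: "(p,x) \<notin> E" if x: "x \<in> X" "(q,x) \<in> E" "w0 \<in> Q" "(w0,x) \<notin> E" for x w0
  proof
    assume px: "(p,x) \<in> E"
    obtain w where w: "w \<in> S'" "nbh E S x \<subset> nbh E S w" using domX[OF x(1)] by blast
    have "p \<in> nbh E S x" "q \<in> nbh E S x" "x \<in> nbh E S x" using x px pS qS XS refl sE by auto
    hence "p \<in> nbh E S w" "q \<in> nbh E S w" "x \<in> nbh E S w" using w(2) by blast+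
    hence wp: "(w,p) \<in> E" "(w,q) \<in> E" "(w,x) \<in> E" by auto
    have "w \<in> insert p P" unfolding Np[symmetric] using w(1) wp(1) sE by auto
    moreover have "w \<in> insert q Q" unfolding Nq[symmetric] using w(1) wp(2) sE by auto
    moreover have "w \<noteq> p" using wp(2) pq by auto
    moreover have "w \<noteq> q" using wp(1) pq sE by auto
    ultimately have "w \<in> P \<inter> Q" by auto
    hence "Q = {w}" using PQ by blast
    hence "w0 = w" using x(3) by auto
    thus False using wp(3) x(4) by simp
  qed
  obtain w0 where w0: "w0 \<in> P" using Pne by blast
  obtain xp where xp: "xp \<in> X" "(p,xp) \<in> E" "(w0,xp) \<notin> E" using privP[OF w0] by blast
  obtain y0 where y0: "y0 \<in> Q" using Qne by blast
  obtain xq where xq: "xq \<in> X" "(q,xq) \<in> E" "(y0,xq) \<notin> E" using privQ[OF y0] by blast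
  have qxp: "(q,xp) \<notin> E" by (rule A[OF xp(1,2) w0 xp(3)])
  have pxq: "(p,xq) \<notin> E" by (rule B[OF xq(1,2) y0 xq(3)])
  have ne: "xp \<noteq> xq" using qxp xq(2) by auto
  have finX: "finite X" using fin XS finite_subset by blast
  have Xeq: "X = {xp, xq}" by (rule card2_eq[OF finX card[folded X_def] xp(1) xq(1) ne])
  have Pn: "(w,xp) \<notin> E" if wP: "w \<in> P" for w
  proof -
    obtain x where x: "x \<in> X" "(p,x) \<in> E" "(w,x) \<notin> E" using privP[OF wP] by blast
    have "x \<noteq> xq" using x(2) pxq by auto
    hence "x = xp" using x(1) Xeq by auto
    thus ?thesis using x(3) by simp
  qed
  have Qn: "(w,xq) \<notin> E" if wQ: "w \<in> Q" for w
  proof -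
    obtain x where x: "x \<in> X" "(q,x) \<in> E" "(w,x) \<notin> E" using privQ[OF wQ] by blast
    have "x \<noteq> xp" using x(2) qxp by auto
    hence "x = xq" using x(1) Xeq by auto
    thus ?thesis using x(3) by simp
  qed
  have NSp: "nbh E S p \<subseteq> insert p (insert xp P)"
  proof
    fix y assume y: "y \<in> nbh E S p"
    show "y \<in> insert p (insert xp P)"
    proof (cases "y \<in> S'")
      case True
      hence "y \<in> nbh E S' p" using y by auto
      thus ?thesis using Np by auto
    next
      case False
      hence "y \<in> X" using y SX by auto
      hence "y = xp \<or> y = xq" using Xeq by auto
      thus ?thesis using y pxq by auto
    qed
  qed
  have NSq: "nbh E S q \<subseteq> insert q (insert xq Q)"
  proof
    fix y assume y: "y \<in> nbh E S q"
    show "y \<in> insert q (insert xq Q)"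
    proof (cases "y \<in> S'")
      case True
      hence "y \<in> nbh E S' q" using y by auto
      thus ?thesis using Nq by auto
    next
      case False
      hence "y \<in> X" using y SX by auto
      hence "y = xp \<or> y = xq" using Xeq by auto
      thus ?thesis using y qxp by auto
    qed
  qed
  have Nxp: "nbh E S xp = {xp, p}"
  proof -
    obtain w where w: "w \<in> S'" "nbh E S xp \<subset> nbh E S w" using domX[OF xp(1)] by blast
    have "p \<in> nbh E S xp" "xp \<in> nbh E S xp" using xp pS XS refl sE by auto
    hence "p \<in> nbh E S w" "xp \<in> nbh E S w" using w(2) by blast+
    hence wp: "(w,p) \<in> E" "(w,xp) \<in> E" by auto
    have "w \<in> insert p P" unfolding Np[symmetric] using w(1) wp(1) sE by auto
    hence "w = p" using Pn wp(2) by auto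
    hence sub: "nbh E S xp \<subseteq> insert p (insert xp P)" using w(2) NSp by auto
    have "nbh E S xp \<subseteq> {xp, p}"
    proof
      fix y assume y: "y \<in> nbh E S xp"
      hence "y \<notin> P" using Pn sE by auto
      thus "y \<in> {xp, p}" using sub y by auto
    qed
    thus ?thesis using \<open>p \<in> nbh E S xp\<close> \<open>xp \<in> nbh E S xp\<close> by auto
  qed
  have Nxq: "nbh E S xq = {xq, q}"
  proof -
    obtain w where w: "w \<in> S'" "nbh E S xq \<subset> nbh E S w" using domX[OF xq(1)] by blast
    have "q \<in> nbh E S xq" "xq \<in> nbh E S xq" using xq qS XS refl sE by auto
    hence "q \<in> nbh E S w" "xq \<in> nbh E S w" using w(2) by blast+
    hence wp: "(w,q) \<in> E" "(w,xq) \<in> E" by auto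
    have "w \<in> insert q Q" unfolding Nq[symmetric] using w(1) wp(1) sE by auto
    hence "w = q" using Qn wp(2) by auto
    hence sub: "nbh E S xq \<subseteq> insert q (insert xq Q)" using w(2) NSq by auto
    have "nbh E S xq \<subseteq> {xq, q}"
    proof
      fix y assume y: "y \<in> nbh E S xq"
      hence "y \<notin> Q" using Qn sE by auto
      thus "y \<in> {xq, q}" using sub y by auto
    qed
    thus ?thesis using \<open>q \<in> nbh E S xq\<close> \<open>xq \<in> nbh E S xq\<close> by auto
  qed
  show ?thesis using Xeq ne Nxp Nxq unfolding X_def by blast
qed

locale dset =
  fixes E :: "('a\<times>'a) set" and S S' S'' X0 X1 :: "'a set" and p q p' q' xp xq :: 'a
  assumes symE: "sym E" and refl: "\<forall>v\<in>S. (v,v)\<in>E" and fin: "finite S"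
    and X0: "X0 = strict_corners E S" and S': "S' = S - X0"
    and X1: "X1 = strict_corners E S'" and S'': "S'' = S' - X1"
    and pS: "p \<in> S''" and qS: "q \<in> S''" and pq: "p \<noteq> q"
    and Np: "nbh E S'' p = {p,p'}" and Nq: "nbh E S'' q = {q,q'}"
    and xp: "xp \<in> X1" "(p,xp)\<in>E" "(p',xp)\<notin>E" "(q,xp)\<notin>E"
    and xq: "xq \<in> X1" "(q,xq)\<in>E" "(q',xq)\<notin>E" "(p,xq)\<notin>E"
    and c1: "card X1 = 3" and c0: "card X0 \<le> 2"
begin

lemma sym_inst: "dset E S S' S'' X0 X1 q p q' p' xq xp"
  by (unfold_locales) (use symE refl fin X0 S' X1 S'' pS qS pq Np Nq xp xq c1 c0 in auto)

lemma sE: "(a,b) \<in> E \<Longrightarrow> (b,a) \<in> E" using symE by (auto dest: symD)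

lemma subs: "X0 \<subseteq> S" "X1 \<subseteq> S'" "S' \<subseteq> S" "S'' \<subseteq> S'" "S - S' = X0" "S' - S'' = X1"
  "S' \<inter> X0 = {}" "S'' \<inter> X1 = {}"
proof -
  have a: "strict_corners E T \<subseteq> T" for T by (auto simp: sc_mem)
  show "X0 \<subseteq> S" "X1 \<subseteq> S'" "S' \<subseteq> S" "S'' \<subseteq> S'" "S - S' = X0" "S' - S'' = X1"
    "S' \<inter> X0 = {}" "S'' \<inter> X1 = {}"
    using a[of S] a[of S'] X0 X1 S' S'' by auto
qed

lemma X1S': "x \<in> X1 \<Longrightarrow> x \<in> S'" using subs by blast
lemma S''S': "x \<in> S'' \<Longrightarrow> x \<in> S'" using subs by blast
lemma S'S: "x \<in> S' \<Longrightarrow> x \<in> S" using subs by blast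
lemma X0S: "x \<in> X0 \<Longrightarrow> x \<in> S" using subs by blast
lemma rS: "v \<in> S \<Longrightarrow> (v,v) \<in> E" using refl by blast
lemma rS': "v \<in> S' \<Longrightarrow> (v,v) \<in> E" using refl subs by blast
lemma notS'': "x \<in> X1 \<Longrightarrow> x \<notin> S''" using subs by blast
lemma notS': "x \<in> X0 \<Longrightarrow> x \<notin> S'" using subs by blast

lemma finS': "finite S'" using fin subs(3) finite_subset by blast

lemma dom1: assumes x: "x \<in> X1" shows "\<exists>w\<in>S''. nbh E S' x \<subset> nbh E S' w"
proof -
  obtain w where "w \<in> S' - strict_corners E S'" "nbh E S' x \<subset> nbh E S' w"
    using dom_exists[OF finS' x[unfolded X1]] by blast
  thus ?thesis using S'' X1 by blast
qed

lemma dom0: assumes y: "y \<in> X0" shows "\<exists>u\<in>S'. nbh E S y \<subset> nbh E S u"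
proof -
  obtain u where "u \<in> S - strict_corners E S" "nbh E S y \<subset> nbh E S u"
    using dom_exists[OF fin y[unfolded X0]] by blast
  thus ?thesis using S' X0 by blast
qed

lemma priv0: assumes "v \<in> S'" "w \<in> S'" "w \<noteq> v" "nbh E S' v \<subset> nbh E S' w"
  shows "\<exists>y\<in>X0. (v,y)\<in>E \<and> (w,y)\<notin>E"
proof -
  have "v \<notin> strict_corners E S" using assms(1) S' X0 by blast
  from priv_child[OF subs(3) assms(1,2,3) this assms(4)] show ?thesis using subs(5) by blast
qed

lemma inN'p: "y \<in> S'' \<Longrightarrow> (p,y) \<in> E \<Longrightarrow> y = p \<or> y = p'"
  using Np by (metis insertE nbh_mem singletonD)

lemma pS': "p \<in> S'" "q \<in> S'" using pS qS subs by auto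

lemma p'S: "p' \<in> S''" "(p,p') \<in> E"
proof -
  have "p' \<in> nbh E S'' p" using Np by simp
  thus "p' \<in> S''" "(p,p') \<in> E" by auto
qed

lemma dp: "nbh E S' xp \<subset> nbh E S' p"
proof -
  obtain w where w: "w \<in> S''" "nbh E S' xp \<subset> nbh E S' w" using dom1[OF xp(1)] by blast
  have "p \<in> nbh E S' xp" using xp(2) pS' sE by auto
  hence "p \<in> nbh E S' w" using w(2) by blast
  hence "(w,p) \<in> E" by simp
  hence "w = p \<or> w = p'" using inN'p[OF w(1)] sE by blast
  moreover have "xp \<in> nbh E S' xp" using xp(1) subs refl by auto
  hence "(w, xp) \<in> E" using w(2) by auto
  ultimately have "w = p" using xp(3) by auto
  thus ?thesis using w(2) by simp
qed

lemma common: assumes y: "y \<in> X0" "(xp,y)\<in>E" "(xq,y)\<in>E" "(p,y)\<notin>E" shows False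
proof -
  obtain u where u: "u \<in> S'" "nbh E S y \<subset> nbh E S u" using dom0[OF y(1)] by blast
  have "xp \<in> nbh E S y" "xq \<in> nbh E S y" "y \<in> nbh E S y"
    using y xp(1) xq(1) subs refl sE by auto
  hence "xp \<in> nbh E S u" "xq \<in> nbh E S u" "y \<in> nbh E S u" using u(2) by blast+
  hence uE: "(u,xp) \<in> E" "(u,xq) \<in> E" "(u,y) \<in> E" by auto
  have "u \<in> nbh E S' xp" using u(1) uE(1) sE by auto
  hence "u \<in> nbh E S' p" using dp by blast
  hence up: "(p,u) \<in> E" by simp
  have "u \<noteq> p" using uE(3) y(4) by auto
  show False
  proof (cases "u \<in> S''")
    case True
    hence "u = p'" using inN'p[OF True up] \<open>u \<noteq> p\<close> by blast
    thus False using uE(1) xp(3) by simp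
  next
    case False
    hence uX: "u \<in> X1" using u(1) subs by blast
    obtain w where w: "w \<in> S''" "nbh E S' u \<subset> nbh E S' w" using dom1[OF uX] by blast
    have "p \<in> nbh E S' u" "xp \<in> nbh E S' u" "xq \<in> nbh E S' u"
      using up uE pS' xp(1) xq(1) subs sE by auto
    hence "p \<in> nbh E S' w" "xp \<in> nbh E S' w" "xq \<in> nbh E S' w" using w(2) by blast+
    hence wE: "(w,p) \<in> E" "(w,xp) \<in> E" "(w,xq) \<in> E" by auto
    have "w = p \<or> w = p'" using inN'p[OF w(1)] wE(1) sE by blast
    thus False using wE(2,3) xp(3) xq(4) by auto
  qed
qed

lemma half:
  assumes x3: "x3 \<in> X1" "x3 \<noteq> xp" "x3 \<noteq> xq"
    and d: "d \<in> X0" "(xp,d) \<in> E" "(p,d) \<notin> E" "(x3,d) \<in> E"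
    and e: "e \<in> X0" "(xq,e) \<in> E" "(q,e) \<notin> E"
    and de: "d \<noteq> e"
  shows "X1 = {xp,x3,xq} \<and> X0 = {d,e} \<and> nbh E S' xp = {xp,x3,p} \<and> nbh E S' x3 = {xp,x3,p} \<and>
    nbh E S' xq = {xq,q} \<and> nbh E S d = {d,xp,x3} \<and> nbh E S e = {e,xq}"
proof -
  interpret sy: dset E S S' S'' X0 X1 q p q' p' xq xp by (rule sym_inst)
  have finX1: "finite X1" using finS' subs finite_subset by blast
  have finX0: "finite X0" using fin subs finite_subset by blast
  have xpq: "xp \<noteq> xq" using xp(2) xq(4) by auto
  have X1eq: "X1 = {xp,x3,xq}"
  proof -
    have sub: "{xp,x3,xq} \<subseteq> X1" using xp xq x3 by auto
    have "card {xp,x3,xq} = 3" using x3 xpq by auto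
    hence "{xp,x3,xq} = X1" using card_seteq[OF finX1 sub] c1 by simp
    thus ?thesis by simp
  qed
  have X0eq: "X0 = {d,e}" by (rule card2_eq[OF finX0 c0 d(1) e(1) de])
  obtain u where u: "u \<in> S'" "nbh E S d \<subset> nbh E S u" using dom0[OF d(1)] by blast
  have "xp \<in> nbh E S d" "x3 \<in> nbh E S d" "d \<in> nbh E S d"
    using d xp(1) x3(1) subs refl sE by auto
  hence "xp \<in> nbh E S u" "x3 \<in> nbh E S u" "d \<in> nbh E S u" using u(2) by blast+
  hence uE: "(u,xp) \<in> E" "(u,x3) \<in> E" "(u,d) \<in> E" by auto
  have "u \<in> nbh E S' xp" using u(1) uE(1) sE by auto
  hence "u \<in> nbh E S' p" using dp by blast
  hence up: "(p,u) \<in> E" by simp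
  have unp: "u \<noteq> p" using uE(3) d(3) by auto
  have uX: "u \<in> X1"
  proof (rule ccontr)
    assume "u \<notin> X1"
    hence "u \<in> S''" using u(1) subs by blast
    hence "u = p'" using inN'p[OF _ up] unp by blast
    thus False using uE(1) xp(3) by simp
  qed
  have u2: "u = xp \<or> u = x3" using uX X1eq up xq(4) by auto
  have xpx3: "(xp,x3) \<in> E"
  proof (cases "u = xp")
    case True thus ?thesis using uE(2) by simp
  next
    case False thus ?thesis using u2 uE(1) sE by auto
  qed
  have px3: "(p,x3) \<in> E"
  proof -
    have "x3 \<in> nbh E S' xp" using xpx3 x3(1) subs by auto
    hence "x3 \<in> nbh E S' p" using dp by blast
    thus ?thesis by simp
  qed
  have Np': "nbh E S' p = {p,p',xp,x3}"
  proof (intro equalityI subsetI)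
    fix y assume y: "y \<in> nbh E S' p"
    show "y \<in> {p,p',xp,x3}"
    proof (cases "y \<in> S''")
      case True thus ?thesis using inN'p[OF True] y by auto
    next
      case False
      hence "y \<in> X1" using y subs by auto
      thus ?thesis using X1eq y xq(4) by auto
    qed
  next
    fix y assume y: "y \<in> {p,p',xp,x3}"
    have "p' \<in> nbh E S' p" using p'S by (simp add: S''S')
    moreover have "p \<in> nbh E S' p" using pS' by (simp add: rS')
    moreover have "xp \<in> nbh E S' p" using xp by (simp add: X1S')
    moreover have "x3 \<in> nbh E S' p" using px3 x3 by (simp add: X1S')
    ultimately show "y \<in> nbh E S' p" using y by blast
  qed
  obtain w3 where w3: "w3 \<in> S''" "nbh E S' x3 \<subset> nbh E S' w3" using dom1[OF x3(1)] by blast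
  have "p \<in> nbh E S' x3" using px3 pS' by (simp add: sE)
  moreover have "xp \<in> nbh E S' x3" using xpx3 xp(1) by (simp add: sE X1S')
  moreover have "x3 \<in> nbh E S' x3" using x3(1) by (simp add: X1S' rS')
  ultimately have in3: "p \<in> nbh E S' x3" "xp \<in> nbh E S' x3" "x3 \<in> nbh E S' x3" by blast+
  hence "p \<in> nbh E S' w3" "xp \<in> nbh E S' w3" using w3(2) by blast+
  hence w3E: "(w3,p) \<in> E" "(w3,xp) \<in> E" by auto
  have "w3 = p \<or> w3 = p'" using inN'p[OF w3(1)] w3E(1) sE by blast
  hence w3p: "w3 = p" using w3E(2) xp(3) by auto
  have x3p': "(x3,p') \<notin> E"
  proof
    assume "(x3,p') \<in> E"
    hence "p' \<in> nbh E S' x3" using p'S by (simp add: S''S')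
    hence "nbh E S' p \<subseteq> nbh E S' x3"
      unfolding Np' using in3 by blast
    thus False using w3(2) w3p by auto
  qed
  have Nx3: "nbh E S' x3 = {xp,x3,p}"
  proof (intro equalityI subsetI)
    fix y assume y: "y \<in> nbh E S' x3"
    hence "y \<in> {p,p',xp,x3}" using w3(2) w3p Np' by blast
    moreover have "y \<noteq> p'" using y x3p' by auto
    ultimately show "y \<in> {xp,x3,p}" by auto
  next
    fix y assume "y \<in> {xp,x3,p}"
    thus "y \<in> nbh E S' x3" using in3 by blast
  qed
  have inxp: "xp \<in> nbh E S' xp" "x3 \<in> nbh E S' xp" "p \<in> nbh E S' xp"
    using in3 xp x3 pS' by (simp_all add: X1S' rS' sE xpx3)
  have Nxp: "nbh E S' xp = {xp,x3,p}"
  proof (intro equalityI subsetI)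
    fix y assume y: "y \<in> nbh E S' xp"
    hence "y \<in> {p,p',xp,x3}" using dp Np' by blast
    moreover have "y \<noteq> p'" using y xp(3) sE by auto
    ultimately show "y \<in> {xp,x3,p}" by auto
  next
    fix y assume "y \<in> {xp,x3,p}"
    thus "y \<in> nbh E S' xp" using inxp by blast
  qed
  have qx3: "(q,x3) \<notin> E"
  proof
    assume "(q,x3) \<in> E"
    hence "q \<in> nbh E S' x3" using pS' by (simp add: sE)
    hence "q \<in> {xp,x3,p}" using Nx3 by simp
    moreover have "q \<noteq> xp" "q \<noteq> x3" using qS xp(1) x3(1) notS'' by auto
    ultimately show False using pq by auto
  qed
  have inq: "q \<in> nbh E S' q" "q' \<in> nbh E S' q" "xq \<in> nbh E S' q"
    using pS' sy.p'S xq by (simp_all add: rS' S''S' X1S')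
  have Nq': "nbh E S' q = {q,q',xq}"
  proof (intro equalityI subsetI)
    fix y assume y: "y \<in> nbh E S' q"
    show "y \<in> {q,q',xq}"
    proof (cases "y \<in> S''")
      case True thus ?thesis using sy.inN'p[OF True] y by auto
    next
      case False
      hence "y \<in> X1" using y subs by auto
      thus ?thesis using X1eq y xp(4) qx3 by auto
    qed
  next
    fix y assume "y \<in> {q,q',xq}"
    thus "y \<in> nbh E S' q" using inq by blast
  qed
  have inxq: "xq \<in> nbh E S' xq" "q \<in> nbh E S' xq"
    using xq pS' by (simp_all add: X1S' rS' sE)
  have Nxq: "nbh E S' xq = {xq,q}"
  proof (intro equalityI subsetI)
    fix y assume y: "y \<in> nbh E S' xq"
    hence "y \<in> {q,q',xq}" using sy.dp Nq' by blast
    moreover have "y \<noteq> q'" using y xq(3) sE by auto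
    ultimately show "y \<in> {xq,q}" by auto
  next
    fix y assume "y \<in> {xq,q}"
    thus "y \<in> nbh E S' xq" using inxq by blast
  qed
  have NS: "nbh E S v = nbh E S' v \<union> {y\<in>X0. (v,y) \<in> E}" for v
    using subs(3,5) by auto
  have Nd_sub: "nbh E S d \<subseteq> {xp,x3,d,e}"
  proof
    fix y assume y: "y \<in> nbh E S d"
    hence yu: "y \<in> nbh E S u" using u(2) by blast
    have "y \<noteq> p" using y d(3) sE by auto
    have "nbh E S' u \<subseteq> {xp,x3,p}" using u2 Nxp Nx3 by auto
    hence "nbh E S u \<subseteq> {xp,x3,p,d,e}" unfolding NS[of u] X0eq by auto
    thus "y \<in> {xp,x3,d,e}" using yu \<open>y \<noteq> p\<close> by auto
  qed
  obtain u' where u': "u' \<in> S'" "nbh E S e \<subset> nbh E S u'" using dom0[OF e(1)] by blast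
  have "xq \<in> nbh E S e" "e \<in> nbh E S e" using e xq(1) by (simp_all add: sE X1S' S'S X0S rS)
  hence "xq \<in> nbh E S u'" "e \<in> nbh E S u'" using u'(2) by blast+
  hence u'E: "(u',xq) \<in> E" "(u',e) \<in> E" by auto
  have "u' \<in> nbh E S' xq" using u'(1) u'E(1) by (simp add: sE)
  hence "u' = xq \<or> u' = q" using Nxq by auto
  hence u'q: "u' = xq" using u'E(2) e(3) by auto
  have Ne_sub: "nbh E S e \<subseteq> {xq,d,e}"
  proof
    fix y assume y: "y \<in> nbh E S e"
    hence yu: "y \<in> nbh E S xq" using u'(2) u'q by blast
    have "y \<noteq> q" using y e(3) sE by auto
    have "nbh E S xq \<subseteq> {xq,q,d,e}" unfolding NS[of xq] Nxq X0eq by auto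
    thus "y \<in> {xq,d,e}" using yu \<open>y \<noteq> q\<close> by auto
  qed
  have de_ne: "(d,e) \<notin> E"
  proof
    assume de: "(d,e) \<in> E"
    hence "d \<in> nbh E S e" using d(1) by (simp add: X0S sE)
    hence "d \<in> nbh E S xq" using u'(2) u'q by blast
    hence "(xq,d) \<in> E" by simp
    thus False using common[OF d(1) d(2) _ d(3)] by blast
  qed
  have ind: "d \<in> nbh E S d" "xp \<in> nbh E S d" "x3 \<in> nbh E S d"
    using d xp(1) x3(1) by (simp_all add: X0S rS sE X1S' S'S)
  have Nd: "nbh E S d = {d,xp,x3}"
  proof (intro equalityI subsetI)
    fix y assume y: "y \<in> nbh E S d"
    hence "y \<noteq> e" using de_ne by auto
    thus "y \<in> {d,xp,x3}" using Nd_sub y by auto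
  next
    fix y assume "y \<in> {d,xp,x3}"
    thus "y \<in> nbh E S d" using ind by blast
  qed
  have Ne: "nbh E S e = {e,xq}"
  proof (intro equalityI subsetI)
    fix y assume y: "y \<in> nbh E S e"
    hence "y \<noteq> d" using de_ne sE by auto
    thus "y \<in> {e,xq}" using Ne_sub y by auto
  next
    fix y assume "y \<in> {e,xq}"
    thus "y \<in> nbh E S e" using \<open>xq \<in> nbh E S e\<close> \<open>e \<in> nbh E S e\<close> by blast
  qed
  show ?thesis using X1eq X0eq Nxp Nx3 Nxq Nd Ne by simp
qed

lemma dcore: "\<exists>x3 d e. x3 \<in> X1 \<and> x3 \<noteq> xp \<and> x3 \<noteq> xq \<and> d \<in> X0 \<and> e \<in> X0 \<and> d \<noteq> e \<and>
   ((X1 = {xp,x3,xq} \<and> X0 = {d,e} \<and> nbh E S' xp = {xp,x3,p} \<and> nbh E S' x3 = {xp,x3,p} \<and>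
     nbh E S' xq = {xq,q} \<and> nbh E S d = {d,xp,x3} \<and> nbh E S e = {e,xq}) \<or>
    (X1 = {xq,x3,xp} \<and> X0 = {d,e} \<and> nbh E S' xq = {xq,x3,q} \<and> nbh E S' x3 = {xq,x3,q} \<and>
     nbh E S' xp = {xp,p} \<and> nbh E S d = {d,xq,x3} \<and> nbh E S e = {e,xp}))"
proof -
  interpret sy: dset E S S' S'' X0 X1 q p q' p' xq xp by (rule sym_inst)
  have finX1: "finite X1" using finS' subs finite_subset by blast
  have finX0: "finite X0" using fin subs finite_subset by blast
  have xpS': "xp \<in> S'" "xq \<in> S'" using xp xq by (simp_all add: X1S')
  have pxp: "p \<noteq> xp" "q \<noteq> xq" using pS qS xp xq notS'' by auto
  obtain dp' where dp': "dp' \<in> X0" "(xp,dp') \<in> E" "(p,dp') \<notin> E"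
    using priv0[OF xpS'(1) pS'(1) pxp(1) dp] by blast
  obtain dq' where dq': "dq' \<in> X0" "(xq,dq') \<in> E" "(q,dq') \<notin> E"
    using priv0[OF xpS'(2) pS'(2) pxp(2) sy.dp] by blast
  have dne: "dp' \<noteq> dq'"
  proof
    assume "dp' = dq'"
    thus False using common[OF dp'(1) dp'(2) _ dp'(3)] dq'(2) by simp
  qed
  have X0eq: "X0 = {dp', dq'}" by (rule card2_eq[OF finX0 c0 dp'(1) dq'(1) dne])
  obtain x3 where x3: "x3 \<in> X1" "x3 \<noteq> xp" "x3 \<noteq> xq"
  proof -
    have "\<not> X1 \<subseteq> {xp, xq}"
    proof
      assume "X1 \<subseteq> {xp,xq}"
      hence "card X1 \<le> card {xp,xq}" by (rule card_mono[rotated]) simp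
      also have "\<dots> \<le> 2" by (rule card_insert_le_m1) auto
      finally show False using c1 by simp
    qed
    thus ?thesis using that by blast
  qed
  obtain w3 where w3: "w3 \<in> S''" "nbh E S' x3 \<subset> nbh E S' w3" using dom1[OF x3(1)] by blast
  have x3S': "x3 \<in> S'" using x3(1) by (simp add: X1S')
  have w3ne: "w3 \<noteq> x3" using w3(1) x3(1) notS'' by auto
  obtain y where y: "y \<in> X0" "(x3,y) \<in> E"
    using priv0[OF x3S' S''S'[OF w3(1)] w3ne w3(2)] by blast
  show ?thesis
  proof (cases "y = dp'")
    case True
    have "X1 = {xp,x3,xq} \<and> X0 = {dp',dq'} \<and> nbh E S' xp = {xp,x3,p} \<and> nbh E S' x3 = {xp,x3,p} \<and>
      nbh E S' xq = {xq,q} \<and> nbh E S dp' = {dp',xp,x3} \<and> nbh E S dq' = {dq',xq}"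
      by (rule half[OF x3 dp'(1,2,3) _ dq' dne]) (use True y in simp)
    thus ?thesis using x3 dp'(1) dq'(1) dne by blast
  next
    case False
    hence T: "y = dq'" using y(1) X0eq by auto
    have "X1 = {xq,x3,xp} \<and> X0 = {dq',dp'} \<and> nbh E S' xq = {xq,x3,q} \<and> nbh E S' x3 = {xq,x3,q} \<and>
      nbh E S' xp = {xp,p} \<and> nbh E S dq' = {dq',xq,x3} \<and> nbh E S dp' = {dp',xp}"
      by (rule sy.half) (use x3 dq' dp' dne T y in auto)
    thus ?thesis using x3 dp'(1) dq'(1) dne by blast
  qed
qed

end

locale one_lev =
  fixes E :: "('a\<times>'a) set" and S S' X :: "'a set"
  assumes symE: "sym E" and refl: "\<forall>v\<in>S. (v,v)\<in>E" and fin: "finite S"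
    and X: "X = strict_corners E S" and S': "S' = S - X"
begin

lemma sE: "(a,b) \<in> E \<Longrightarrow> (b,a) \<in> E" using symE by (auto dest: symD)

lemma subs: "X \<subseteq> S" "S' \<subseteq> S" "S = S' \<union> X" "S' \<inter> X = {}"
proof -
  have a: "strict_corners E S \<subseteq> S" by (auto simp: sc_mem)
  show "X \<subseteq> S" "S' \<subseteq> S" "S = S' \<union> X" "S' \<inter> X = {}" using a X S' by auto
qed

lemma XS: "x \<in> X \<Longrightarrow> x \<in> S" using subs by blast
lemma S'S: "x \<in> S' \<Longrightarrow> x \<in> S" using subs by blast
lemma rS: "v \<in> S \<Longrightarrow> (v,v) \<in> E" using refl by blast
lemma notS': "x \<in> X \<Longrightarrow> x \<notin> S'" using subs by blast

lemma dom: assumes x: "x \<in> X" shows "\<exists>w\<in>S'. w \<noteq> x \<and> nbh E S x \<subset> nbh E S w"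
proof -
  obtain w where "w \<in> S - strict_corners E S" "w \<noteq> x" "nbh E S x \<subset> nbh E S w"
    using dom_exists[OF fin x[unfolded X]] by blast
  thus ?thesis using S' X by blast
qed

lemma notsc: assumes "v \<in> S'" "w \<in> S" "w \<noteq> v" shows "\<not> nbh E S v \<subset> nbh E S w"
proof
  assume "nbh E S v \<subset> nbh E S w"
  hence "v \<in> strict_corners E S" using assms S'S by (auto simp: sc_mem)
  thus False using assms(1) S' X by blast
qed

lemma top1:
  assumes Sc: "S' = {c}" and c2: "card X = 2"
  shows "\<exists>a b. X = {a,b} \<and> a \<noteq> b \<and> nbh E S a = {a,c} \<and> nbh E S b = {b,c}"
proof -
  obtain a b where ab: "X = {a,b}" "a \<noteq> b" using c2 by (auto simp: card_2_iff)
  have Seq: "S = {c,a,b}" using subs(3) Sc ab by auto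
  have cl: "nbh E S x = {x,c}" if xy: "x \<in> X" "y \<in> X" "x \<noteq> y" for x y
  proof -
    obtain w where w: "w \<in> S'" "nbh E S x \<subset> nbh E S w" using dom[OF xy(1)] by blast
    have wc: "w = c" using w(1) Sc by simp
    have xx: "x \<in> nbh E S x" using xy(1) by (simp add: XS rS)
    hence "(c,x) \<in> E" using w(2) wc by auto
    hence cx: "c \<in> nbh E S x" using Seq by (simp add: sE)
    have S3: "S = {c,x,y}" using Seq ab xy by auto
    have "(x,y) \<notin> E"
    proof
      assume "(x,y) \<in> E"
      hence "y \<in> nbh E S x" using xy(2) by (simp add: XS)
      hence "S \<subseteq> nbh E S x" using S3 xx cx by auto
      thus False using w(2) nbh_sub[of E S w] by blast
    qed
    hence "nbh E S x \<subseteq> {x,c}" using S3 by auto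
    thus ?thesis using xx cx by auto
  qed
  show ?thesis using cl[of a b] cl[of b a] ab by auto
qed

lemma top2:
  assumes Spq: "S' = {p,q}" and pq: "p \<noteq> q" "(p,q) \<in> E" and c2: "card X = 2"
    and T0: "\<forall>v\<in>S'. \<exists>u\<in>S. (v,u) \<notin> E"
  shows "\<exists>a b. X = {a,b} \<and> a \<noteq> b \<and> nbh E S a = {a,p} \<and> nbh E S b = {b,q}"
proof -
  obtain a b where ab: "X = {a,b}" "a \<noteq> b" using c2 by (auto simp: card_2_iff)
  have Seq: "S = {p,q,a,b}" using subs(3) Spq ab by auto
  have pqX: "p \<notin> X" "q \<notin> X" using Spq subs(4) by auto
  obtain wa where wa: "wa \<in> S'" "nbh E S a \<subset> nbh E S wa" using dom[of a] ab by auto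
  obtain wb where wb: "wb \<in> S'" "nbh E S b \<subset> nbh E S wb" using dom[of b] ab by auto
  have aa: "a \<in> nbh E S a" "b \<in> nbh E S b" using ab by (simp_all add: XS rS)
  have waE: "(wa,a) \<in> E" using wa(2) aa(1) by auto
  have wbE: "(wb,b) \<in> E" using wb(2) aa(2) by auto
  have qp: "(q,p) \<in> E" using pq(2) by (rule sE)
  have full: False if "w \<in> S'" "(w,x) \<in> E" "(w,y) \<in> E" "X = {x,y}" for w x y
  proof -
    have "\<forall>u\<in>S. (w,u) \<in> E"
    proof
      fix u assume "u \<in> S"
      hence "u = p \<or> u = q \<or> u = x \<or> u = y" using subs(3) Spq that(4) by auto
      moreover have "(w,p) \<in> E" "(w,q) \<in> E"
        using that(1) Spq pq(2) qp rS[of p] rS[of q] Seq by auto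
      ultimately show "(w,u) \<in> E" using that by auto
    qed
    thus False using T0 that(1) by blast
  qed
  have main: "\<exists>a b. X = {a,b} \<and> a \<noteq> b \<and> nbh E S a = {a,p} \<and> nbh E S b = {b,q}"
    if H: "X = {a',b'}" "a' \<noteq> b'" "(p,a') \<in> E" "(q,b') \<in> E"
      "nbh E S a' \<subseteq> nbh E S p" "nbh E S b' \<subseteq> nbh E S q" for a' b'
  proof -
    have Seq': "S = {p,q,a',b'}" using subs(3) Spq H(1) by auto
    have a'S: "a' \<in> S" "b' \<in> S" using H(1) by (auto simp: XS)
    have pb: "(p,b') \<notin> E"
    proof
      assume "(p,b') \<in> E"
      thus False using full[of p a' b'] H(1,3) Spq by (auto simp: sE)
    qed
    have qa: "(q,a') \<notin> E"
    proof
      assume "(q,a') \<in> E"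
      thus False using full[of q b' a'] H(1,4) Spq by (auto simp: sE insert_commute)
    qed
    have ab': "(a',b') \<notin> E"
    proof
      assume "(a',b') \<in> E"
      hence "b' \<in> nbh E S a'" using a'S by simp
      hence "b' \<in> nbh E S p" using H(5) by blast
      thus False using pb by simp
    qed
    have Na: "nbh E S a' = {a',p}"
    proof (intro equalityI subsetI)
      fix y assume y: "y \<in> nbh E S a'"
      hence "y \<in> {p,q,a',b'}" using Seq' by auto
      moreover have "y \<noteq> q" using y qa sE by auto
      moreover have "y \<noteq> b'" using y ab' by auto
      ultimately show "y \<in> {a',p}" by auto
    next
      fix y assume "y \<in> {a',p}"
      thus "y \<in> nbh E S a'" using a'S Seq' H(3) rS sE by auto
    qed
    have Nb: "nbh E S b' = {b',q}"
    proof (intro equalityI subsetI)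
      fix y assume y: "y \<in> nbh E S b'"
      hence "y \<in> {p,q,a',b'}" using Seq' by auto
      moreover have "y \<noteq> p" using y pb sE by auto
      moreover have "y \<noteq> a'" using y ab' sE by auto
      ultimately show "y \<in> {b',q}" by auto
    next
      fix y assume "y \<in> {b',q}"
      thus "y \<in> nbh E S b'" using a'S Seq' H(4) rS sE by auto
    qed
    show ?thesis using H(1,2) Na Nb by blast
  qed
  have wab: "wa \<noteq> wb"
  proof
    assume "wa = wb"
    thus False using full[OF wa(1) waE _ ab(1)] wbE by simp
  qed
  show ?thesis
  proof (cases "wa = p")
    case True
    hence "wb = q" using wb(1) wab Spq by auto
    thus ?thesis using main[of a b] ab True waE wbE wa(2) wb(2) by auto
  next
    case False
    hence "wa = q" "wb = p" using wa(1) wb(1) wab Spq by auto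
    moreover have "X = {b,a}" using ab by auto
    ultimately show ?thesis using main[of b a] ab waE wbE wa(2) wb(2) by auto
  qed
qed

lemma top3:
  assumes S3: "S' = {u1,u2,u3}" and d: "u1 \<noteq> u2" "u1 \<noteq> u3" "u2 \<noteq> u3"
    and cl: "\<forall>v\<in>S'. \<forall>w\<in>S'. (v,w) \<in> E" and c2: "card X = 2"
    and T0: "\<forall>v\<in>S'. \<exists>u\<in>S. (v,u) \<notin> E"
  shows "\<exists>a b s1 s2 s3. S' = {s1,s2,s3} \<and> s1 \<noteq> s2 \<and> s1 \<noteq> s3 \<and> s2 \<noteq> s3 \<and>
    X = {a,b} \<and> a \<noteq> b \<and> nbh E S a = {a,s1,s2} \<and> nbh E S b = {b,s3}"
proof -
  obtain a b where ab: "X = {a,b}" "a \<noteq> b" using c2 by (auto simp: card_2_iff)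
  have Seq: "S = S' \<union> {a,b}" using subs(3) ab by auto
  have aS: "a \<in> S" "b \<in> S" using ab by (auto simp: XS)
  have abS': "a \<notin> S'" "b \<notin> S'" using ab subs(4) by auto
  have notboth: "\<not> ((s,a) \<in> E \<and> (s,b) \<in> E)" if s: "s \<in> S'" for s
  proof
    assume h: "(s,a) \<in> E \<and> (s,b) \<in> E"
    have "\<forall>u\<in>S. (s,u) \<in> E" using h cl s Seq by auto
    thus False using T0 s by blast
  qed
  obtain wa where wa: "wa \<in> S'" "nbh E S a \<subset> nbh E S wa" using dom[of a] ab by auto
  obtain wb where wb: "wb \<in> S'" "nbh E S b \<subset> nbh E S wb" using dom[of b] ab by auto
  have "a \<in> nbh E S a" "b \<in> nbh E S b" using aS rS by auto
  hence "a \<in> nbh E S wa" "b \<in> nbh E S wb" using wa(2) wb(2) by blast+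
  hence waE: "(wa,a) \<in> E" and wbE: "(wb,b) \<in> E" by auto
  have some: "(s,a) \<in> E \<or> (s,b) \<in> E" if s: "s \<in> S'" for s
  proof (rule ccontr)
    assume h: "\<not> ((s,a) \<in> E \<or> (s,b) \<in> E)"
    have Ns: "nbh E S s = S'" using h cl s Seq by auto
    have "a \<in> nbh E S wa" using waE aS by (simp add: sE)
    hence "nbh E S s \<subset> nbh E S wa" using Ns wa(1) cl abS' by auto
    moreover have "wa \<noteq> s" using h waE sE by auto
    ultimately show False using notsc[OF s S'S[OF wa(1)]] by blast
  qed
  have abE: "(a,b) \<notin> E"
  proof
    assume "(a,b) \<in> E"
    hence "b \<in> nbh E S a" using aS by simp
    hence "(wa,b) \<in> E" using wa(2) by auto
    thus False using notboth[OF wa(1)] waE by simp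
  qed
  have Na: "nbh E S a = insert a {s\<in>S'. (s,a) \<in> E}"
    using Seq abE aS rS sE by auto
  have Nb: "nbh E S b = insert b {s\<in>S'. (s,b) \<in> E}"
    using Seq abE aS rS sE by auto
  have ex: "(s,b) \<in> E \<longleftrightarrow> (s,a) \<notin> E" if "s \<in> S'" for s
    using notboth[OF that] some[OF that] by blast
  have pick: "\<exists>a b s1 s2 s3. S' = {s1,s2,s3} \<and> s1 \<noteq> s2 \<and> s1 \<noteq> s3 \<and> s2 \<noteq> s3 \<and>
    X = {a,b} \<and> a \<noteq> b \<and> nbh E S a = {a,s1,s2} \<and> nbh E S b = {b,s3}"
    if "S' = {s1,s2,s3}" "s1 \<noteq> s2" "s1 \<noteq> s3" "s2 \<noteq> s3" "X = {a',b'}" "a' \<noteq> b'"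
      "nbh E S a' = {a',s1,s2}" "nbh E S b' = {b',s3}" for a' b' s1 s2 s3
    using that by blast
  have u: "u1 \<in> S'" "u2 \<in> S'" "u3 \<in> S'" using S3 by auto
  have ba: "X = {b,a}" using ab by auto
  show ?thesis
  proof (cases "(u1,a) \<in> E"; cases "(u2,a) \<in> E"; cases "(u3,a) \<in> E")
    assume h: "(u1,a) \<in> E" "(u2,a) \<in> E" "(u3,a) \<in> E"
    have "wb \<in> S'" by (rule wb(1))
    hence "(wb,a) \<in> E" using h S3 by auto
    thus ?thesis using notboth[OF wb(1)] wbE by simp
  next
    assume h: "(u1,a) \<in> E" "(u2,a) \<in> E" "(u3,a) \<notin> E"
    show ?thesis by (rule pick[of u1 u2 u3 a b]) (use h S3 d ab Na Nb ex[OF u(1)] ex[OF u(2)] ex[OF u(3)] in auto)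
  next
    assume h: "(u1,a) \<in> E" "(u2,a) \<notin> E" "(u3,a) \<in> E"
    show ?thesis by (rule pick[of u1 u3 u2 a b]) (use h S3 d ab Na Nb ex[OF u(1)] ex[OF u(2)] ex[OF u(3)] in auto)
  next
    assume h: "(u1,a) \<in> E" "(u2,a) \<notin> E" "(u3,a) \<notin> E"
    show ?thesis by (rule pick[of u2 u3 u1 b a]) (use h S3 d ba Na Nb ex[OF u(1)] ex[OF u(2)] ex[OF u(3)] in auto)
  next
    assume h: "(u1,a) \<notin> E" "(u2,a) \<in> E" "(u3,a) \<in> E"
    show ?thesis by (rule pick[of u2 u3 u1 a b]) (use h S3 d ab Na Nb ex[OF u(1)] ex[OF u(2)] ex[OF u(3)] in auto)
  next
    assume h: "(u1,a) \<notin> E" "(u2,a) \<in> E" "(u3,a) \<notin> E"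
    show ?thesis by (rule pick[of u1 u3 u2 b a]) (use h S3 d ba Na Nb ex[OF u(1)] ex[OF u(2)] ex[OF u(3)] in auto)
  next
    assume h: "(u1,a) \<notin> E" "(u2,a) \<notin> E" "(u3,a) \<in> E"
    show ?thesis by (rule pick[of u1 u2 u3 b a]) (use h S3 d ba Na Nb ex[OF u(1)] ex[OF u(2)] ex[OF u(3)] in auto)
  next
    assume h: "(u1,a) \<notin> E" "(u2,a) \<notin> E" "(u3,a) \<notin> E"
    have "(wa,a) \<notin> E" using h wa(1) S3 by auto
    thus ?thesis using waE by simp
  qed
qed

end


locale two_lev =
  fixes E :: "('a\<times>'a) set" and S S' S'' X0 X1 :: "'a set"
  assumes symE: "sym E" and refl: "\<forall>v\<in>S. (v,v)\<in>E" and fin: "finite S"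
    and X0: "X0 = strict_corners E S" and S': "S' = S - X0"
    and X1: "X1 = strict_corners E S'" and S'': "S'' = S' - X1"
begin

lemma sE: "(a,b) \<in> E \<Longrightarrow> (b,a) \<in> E" using symE by (auto dest: symD)

lemma subs: "X0 \<subseteq> S" "X1 \<subseteq> S'" "S' \<subseteq> S" "S'' \<subseteq> S'" "S = S' \<union> X0" "S' = S'' \<union> X1"
  "S' \<inter> X0 = {}" "S'' \<inter> X1 = {}"
proof -
  have a: "strict_corners E T \<subseteq> T" for T by (auto simp: sc_mem)
  show "X0 \<subseteq> S" "X1 \<subseteq> S'" "S' \<subseteq> S" "S'' \<subseteq> S'" "S = S' \<union> X0" "S' = S'' \<union> X1"
    "S' \<inter> X0 = {}" "S'' \<inter> X1 = {}"
    using a[of S] a[of S'] X0 X1 S' S'' by auto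
qed

lemma X1S': "x \<in> X1 \<Longrightarrow> x \<in> S'" using subs by blast
lemma S''S': "x \<in> S'' \<Longrightarrow> x \<in> S'" using subs by blast
lemma S'S: "x \<in> S' \<Longrightarrow> x \<in> S" using subs by blast
lemma X0S: "x \<in> X0 \<Longrightarrow> x \<in> S" using subs by blast
lemma rS: "v \<in> S \<Longrightarrow> (v,v) \<in> E" using refl by blast
lemma rS': "v \<in> S' \<Longrightarrow> (v,v) \<in> E" using refl subs by blast
lemma notS'': "x \<in> X1 \<Longrightarrow> x \<notin> S''" using subs by blast
lemma notS': "x \<in> X0 \<Longrightarrow> x \<notin> S'" using subs by blast
lemma finS': "finite S'" using fin subs(3) finite_subset by blast

lemma dom1: assumes x: "x \<in> X1" shows "\<exists>w\<in>S''. nbh E S' x \<subset> nbh E S' w"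
proof -
  obtain w where "w \<in> S' - strict_corners E S'" "nbh E S' x \<subset> nbh E S' w"
    using dom_exists[OF finS' x[unfolded X1]] by blast
  thus ?thesis using S'' X1 by blast
qed

lemma dom0: assumes y: "y \<in> X0" shows "\<exists>u\<in>S'. nbh E S y \<subset> nbh E S u"
proof -
  obtain u where "u \<in> S - strict_corners E S" "nbh E S y \<subset> nbh E S u"
    using dom_exists[OF fin y[unfolded X0]] by blast
  thus ?thesis using S' X0 by blast
qed

lemma priv0: assumes "v \<in> S'" "w \<in> S'" "w \<noteq> v" "nbh E S' v \<subset> nbh E S' w"
  shows "\<exists>y\<in>X0. (v,y)\<in>E \<and> (w,y)\<notin>E"
proof -
  have "v \<notin> strict_corners E S" using assms(1) S' X0 by blast
  from priv_child[OF subs(3) assms(1,2,3) this assms(4)] show ?thesis using subs(5,7) by blast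
qed

lemma notsc': assumes "v \<in> S''" "w \<in> S'" "w \<noteq> v" shows "\<not> nbh E S' v \<subset> nbh E S' w"
proof
  assume "nbh E S' v \<subset> nbh E S' w"
  hence "v \<in> strict_corners E S'" using assms S''S' by (auto simp: sc_mem)
  thus False using assms(1) S'' X1 by blast
qed

context
  fixes c assumes Sc: "S'' = {c}" and c0: "card X0 = 2"
begin

lemma cS: "c \<in> S'" "c \<in> S" using Sc subs by auto

lemma domc: assumes x: "x \<in> X1" shows "nbh E S' x \<subset> nbh E S' c" "(c,x) \<in> E"
proof -
  obtain w where "w \<in> S''" "nbh E S' x \<subset> nbh E S' w" using dom1[OF x] by blast
  thus dc: "nbh E S' x \<subset> nbh E S' c" using Sc by simp
  have "x \<in> nbh E S' x" using x by (simp add: X1S' rS')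
  hence "x \<in> nbh E S' c" using dc by blast
  thus "(c,x) \<in> E" by simp
qed

lemma childc: assumes x: "x \<in> X1" shows "\<exists>y\<in>X0. (x,y)\<in>E \<and> (c,y)\<notin>E"
proof -
  have "c \<noteq> x" using x Sc notS'' by auto
  thus ?thesis using priv0[OF X1S'[OF x] cS(1) _ domc(1)[OF x]] by blast
qed

lemma pair:
  assumes X1e: "X1 = {x1,x2,x3}" and dd: "x1 \<noteq> x2" "x1 \<noteq> x3" "x2 \<noteq> x3"
    and z: "z \<in> X0" "(x1,z) \<in> E" "(x2,z) \<in> E" "(c,z) \<notin> E"
  shows "\<exists>a t b d e. X1 = {a,t,b} \<and> a \<noteq> t \<and> a \<noteq> b \<and> t \<noteq> b \<and> X0 = {d,e} \<and> d \<noteq> e \<and>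
    nbh E S' a = {a,t,c} \<and> nbh E S' t = {a,t,c} \<and> nbh E S' b = {b,c} \<and>
    nbh E S d = {d,a,t} \<and> nbh E S e = {e,b}"
proof -
  have S'e: "S' = {c,x1,x2,x3}" using subs(6) Sc X1e by auto
  have xS: "x1 \<in> S'" "x2 \<in> S'" "x3 \<in> S'" using X1e by (auto simp: X1S')
  have cx: "(c,x1) \<in> E" "(c,x2) \<in> E" "(c,x3) \<in> E" using domc(2) X1e by auto
  have noboth: False if "x \<in> X1" "X1 = {x,y,y'}" "(x,y) \<in> E" "(x,y') \<in> E" for x y y'
  proof -
    have "S' \<subseteq> nbh E S' x"
    proof
      fix v assume v: "v \<in> S'"
      hence "v = c \<or> v = x \<or> v = y \<or> v = y'" using subs(6) Sc that(2) by auto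
      thus "v \<in> nbh E S' x" using v that rS' X1S' domc(2)[OF that(1)] sE by auto
    qed
    thus False using domc(1)[OF that(1)] nbh_sub[of E S' c] by blast
  qed
  obtain u where u: "u \<in> S'" "nbh E S z \<subset> nbh E S u" using dom0[OF z(1)] by blast
  have "x1 \<in> nbh E S z" "x2 \<in> nbh E S z" "z \<in> nbh E S z"
    using z xS by (simp_all add: sE S'S X0S rS)
  hence "x1 \<in> nbh E S u" "x2 \<in> nbh E S u" "z \<in> nbh E S u" using u(2) by blast+
  hence uE: "(u,x1) \<in> E" "(u,x2) \<in> E" "(u,z) \<in> E" by auto
  have "u \<noteq> c" using uE(3) z(4) by auto
  hence uX: "u \<in> X1" using u(1) subs(6) Sc by auto
  have u12: "u = x1 \<or> u = x2"
  proof (rule ccontr)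
    assume "\<not> (u = x1 \<or> u = x2)"
    hence "u = x3" using uX X1e by auto
    thus False using noboth[of x3 x1 x2] uE X1e by auto
  qed
  have x12: "(x1,x2) \<in> E" using u12 uE sE by auto
  have x13: "(x1,x3) \<notin> E" using noboth[of x1 x2 x3] X1e x12 by auto
  have x23: "(x2,x3) \<notin> E" using noboth[of x2 x1 x3] X1e x12 sE by auto
  have ux3: "(u,x3) \<notin> E" using u12 x13 x23 by auto
  have zx3: "(z,x3) \<notin> E"
  proof
    assume "(z,x3) \<in> E"
    hence "x3 \<in> nbh E S z" using xS by (simp add: S'S)
    hence "(u,x3) \<in> E" using u(2) by auto
    thus False using ux3 by simp
  qed
  obtain z' where z': "z' \<in> X0" "(x3,z') \<in> E" "(c,z') \<notin> E" using childc[of x3] X1e by auto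
  have zz: "z \<noteq> z'" using zx3 z'(2) sE by auto
  have finX0: "finite X0" using fin subs finite_subset by blast
  have X0e: "X0 = {z,z'}" by (rule card2_eq[OF finX0 _ z(1) z'(1) zz]) (use c0 in simp)
  have Se: "S = {c,x1,x2,x3,z,z'}" using subs(5) S'e X0e by auto
  obtain u' where u': "u' \<in> S'" "nbh E S z' \<subset> nbh E S u'" using dom0[OF z'(1)] by blast
  have "x3 \<in> nbh E S z'" "z' \<in> nbh E S z'"
    using z' xS by (simp_all add: sE S'S X0S rS)
  hence "x3 \<in> nbh E S u'" "z' \<in> nbh E S u'" using u'(2) by blast+
  hence u'E: "(u',x3) \<in> E" "(u',z') \<in> E" by auto
  have "u' \<noteq> c" using u'E(2) z'(3) by auto
  hence "u' \<in> {x1,x2,x3}" using u'(1) S'e by auto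
  hence u'3: "u' = x3" using u'E(1) x13 x23 by auto
  have Nx3: "nbh E S x3 \<subseteq> {x3,c,z'}"
  proof
    fix y assume y: "y \<in> nbh E S x3"
    hence "y \<in> {c,x1,x2,x3,z,z'}" using Se by auto
    moreover have "y \<noteq> x1" "y \<noteq> x2" "y \<noteq> z" using y x13 x23 zx3 sE by auto
    ultimately show "y \<in> {x3,c,z'}" by auto
  qed
  have Nz': "nbh E S z' = {z',x3}"
  proof (intro equalityI subsetI)
    fix y assume y: "y \<in> nbh E S z'"
    hence "y \<in> {x3,c,z'}" using u'(2) u'3 Nx3 by blast
    moreover have "y \<noteq> c" using y z'(3) sE by auto
    ultimately show "y \<in> {z',x3}" by auto
  next
    fix y assume "y \<in> {z',x3}"
    thus "y \<in> nbh E S z'" using \<open>x3 \<in> nbh E S z'\<close> \<open>z' \<in> nbh E S z'\<close> by blast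
  qed
  have uz': "(u,z') \<notin> E"
  proof
    assume "(u,z') \<in> E"
    hence "u \<in> nbh E S z'" using u(1) by (simp add: sE S'S)
    hence "u = z' \<or> u = x3" using Nz' by auto
    thus False using u(1) z'(1) notS' u12 dd by auto
  qed
  have Nu: "nbh E S u \<subseteq> {c,x1,x2,z}"
  proof
    fix y assume y: "y \<in> nbh E S u"
    hence "y \<in> {c,x1,x2,x3,z,z'}" using Se by auto
    moreover have "y \<noteq> x3" "y \<noteq> z'" using y ux3 uz' by auto
    ultimately show "y \<in> {c,x1,x2,z}" by auto
  qed
  have Nz: "nbh E S z = {z,x1,x2}"
  proof (intro equalityI subsetI)
    fix y assume y: "y \<in> nbh E S z"
    hence "y \<in> {c,x1,x2,z}" using u(2) Nu by blast
    moreover have "y \<noteq> c" using y z(4) sE by auto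
    ultimately show "y \<in> {z,x1,x2}" by auto
  next
    fix y assume "y \<in> {z,x1,x2}"
    thus "y \<in> nbh E S z" using \<open>x1 \<in> nbh E S z\<close> \<open>x2 \<in> nbh E S z\<close> \<open>z \<in> nbh E S z\<close> by blast
  qed
  have N1: "nbh E S' x1 = {x1,x2,c}"
  proof (intro equalityI subsetI)
    fix y assume y: "y \<in> nbh E S' x1"
    hence "y \<in> {c,x1,x2,x3}" using S'e by auto
    moreover have "y \<noteq> x3" using y x13 by auto
    ultimately show "y \<in> {x1,x2,c}" by auto
  next
    fix y assume "y \<in> {x1,x2,c}"
    thus "y \<in> nbh E S' x1" using xS cS cx x12 rS' sE by auto
  qed
  have N2: "nbh E S' x2 = {x1,x2,c}"
  proof (intro equalityI subsetI)
    fix y assume y: "y \<in> nbh E S' x2"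
    hence "y \<in> {c,x1,x2,x3}" using S'e by auto
    moreover have "y \<noteq> x3" using y x23 by auto
    ultimately show "y \<in> {x1,x2,c}" by auto
  next
    fix y assume "y \<in> {x1,x2,c}"
    thus "y \<in> nbh E S' x2" using xS cS cx x12 rS' sE by auto
  qed
  have N3: "nbh E S' x3 = {x3,c}"
  proof (intro equalityI subsetI)
    fix y assume y: "y \<in> nbh E S' x3"
    hence "y \<in> {c,x1,x2,x3}" using S'e by auto
    moreover have "y \<noteq> x1" "y \<noteq> x2" using y x13 x23 sE by auto
    ultimately show "y \<in> {x3,c}" by auto
  next
    fix y assume "y \<in> {x3,c}"
    thus "y \<in> nbh E S' x3" using xS cS cx rS' sE by auto
  qed
  show ?thesis
    by (rule exI[of _ x1], rule exI[of _ x2], rule exI[of _ x3], rule exI[of _ z], rule exI[of _ z'])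
      (use X1e dd X0e zz N1 N2 N3 Nz Nz' in auto)
qed

lemma dtop1:
  assumes c1: "card X1 = 3"
  shows "\<exists>a t b d e. X1 = {a,t,b} \<and> a \<noteq> t \<and> a \<noteq> b \<and> t \<noteq> b \<and> X0 = {d,e} \<and> d \<noteq> e \<and>
    nbh E S' a = {a,t,c} \<and> nbh E S' t = {a,t,c} \<and> nbh E S' b = {b,c} \<and>
    nbh E S d = {d,a,t} \<and> nbh E S e = {e,b}"
proof -
  obtain x1 x2 x3 where X1e: "X1 = {x1,x2,x3}" "x1 \<noteq> x2" "x2 \<noteq> x3" "x1 \<noteq> x3"
    using c1 by (auto simp: card_3_iff)
  obtain d0 e0 where X0e: "X0 = {d0,e0}" using c0 by (auto simp: card_2_iff)
  obtain y1 where y1: "y1 \<in> X0" "(x1,y1) \<in> E" "(c,y1) \<notin> E" using childc[of x1] X1e by auto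
  obtain y2 where y2: "y2 \<in> X0" "(x2,y2) \<in> E" "(c,y2) \<notin> E" using childc[of x2] X1e by auto
  obtain y3 where y3: "y3 \<in> X0" "(x3,y3) \<in> E" "(c,y3) \<notin> E" using childc[of x3] X1e by auto
  have "y1 = y2 \<or> y1 = y3 \<or> y2 = y3" using y1(1) y2(1) y3(1) X0e by auto
  moreover have ?thesis if "y1 = y2"
    by (rule pair[of x1 x2 x3 y1]) (use X1e y1 y2 that in auto)
  moreover have ?thesis if "y1 = y3"
    by (rule pair[of x1 x3 x2 y1]) (use X1e y1 y3 that in auto)
  moreover have ?thesis if "y2 = y3"
    by (rule pair[of x2 x3 x1 y2]) (use X1e y2 y3 that in auto)
  ultimately show ?thesis by blast
qed

end

end

lemma extG:
  assumes symE: "sym E" and I: "Inv E S' lo hi J pos" and lh: "lo \<le> hi"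
    and S: "S = S' \<union> A \<union> B" and dA: "A \<inter> S' = {}" and dB: "B \<inter> S' = {}" and dAB: "A \<inter> B = {}"
    and cA: "card A = (if lo - 1 = J then 2 else 1)" and cB: "card B = (if hi + 1 = J then 2 else 1)"
    and NA: "\<forall>a\<in>A. nbh E S a = A \<union> {v\<in>S'. pos v = lo}"
    and NB: "\<forall>b\<in>B. nbh E S b = B \<union> {v\<in>S'. pos v = hi}"
  shows "Inv E S (lo - 1) (hi + 1) J (\<lambda>v. if v \<in> A then lo - 1 else if v \<in> B then hi + 1 else pos v)"
proof -
  define pos' where "pos' = (\<lambda>v. if v \<in> A then lo - 1 else if v \<in> B then hi + 1 else pos v)"
  have pA: "v \<in> A \<Longrightarrow> pos' v = lo - 1" for v by (simp add: pos'_def)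
  have pB: "v \<in> B \<Longrightarrow> pos' v = hi + 1" for v using dAB by (auto simp: pos'_def)
  have pS: "v \<in> S' \<Longrightarrow> pos' v = pos v" for v using dA dB by (auto simp: pos'_def)
  have rng: "v \<in> S' \<Longrightarrow> lo \<le> pos v \<and> pos v \<le> hi" for v using Inv_range[OF I] by blast
  have sE: "(x,y) \<in> E \<Longrightarrow> (y,x) \<in> E" for x y using symE by (auto dest: symD)
  have R: "\<forall>v\<in>S. lo - 1 \<le> pos' v \<and> pos' v \<le> hi + 1"
  proof
    fix v assume "v \<in> S"
    hence "v \<in> S' \<or> v \<in> A \<or> v \<in> B" using S by auto
    thus "lo - 1 \<le> pos' v \<and> pos' v \<le> hi + 1" using pA pB pS rng lh by fastforce
  qed
  have C: "card {v\<in>S. pos' v = i} = (if i = J then 2 else 1)" if i: "lo - 1 \<le> i" "i \<le> hi + 1" for i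
  proof -
    consider "i = lo - 1" | "i = hi + 1" | "lo \<le> i \<and> i \<le> hi" using i by linarith
    thus ?thesis
    proof cases
      case 1
      have "{v\<in>S. pos' v = i} = A"
      proof (intro equalityI subsetI)
        fix v assume v: "v \<in> {v\<in>S. pos' v = i}"
        hence "v \<in> S' \<or> v \<in> A \<or> v \<in> B" using S by auto
        moreover have "v \<notin> S'" using v pS rng 1 by fastforce
        moreover have "v \<notin> B" using v pB 1 lh by fastforce
        ultimately show "v \<in> A" by blast
      next
        fix v assume "v \<in> A" thus "v \<in> {v\<in>S. pos' v = i}" using S pA 1 by auto
      qed
      thus ?thesis using cA 1 by simp
    next
      case 2
      have "{v\<in>S. pos' v = i} = B"
      proof (intro equalityI subsetI)
        fix v assume v: "v \<in> {v\<in>S. pos' v = i}"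
        hence "v \<in> S' \<or> v \<in> A \<or> v \<in> B" using S by auto
        moreover have "v \<notin> S'" using v pS rng 2 by fastforce
        moreover have "v \<notin> A" using v pA 2 lh by fastforce
        ultimately show "v \<in> B" by blast
      next
        fix v assume "v \<in> B" thus "v \<in> {v\<in>S. pos' v = i}" using S pB 2 by auto
      qed
      thus ?thesis using cB 2 by simp
    next
      case 3
      have "{v\<in>S. pos' v = i} = {v\<in>S'. pos v = i}"
      proof (intro equalityI subsetI)
        fix v assume v: "v \<in> {v\<in>S. pos' v = i}"
        hence "v \<in> S' \<or> v \<in> A \<or> v \<in> B" using S by auto
        moreover have "v \<notin> A" using v pA 3 by fastforce
        moreover have "v \<notin> B" using v pB 3 by fastforce
        ultimately show "v \<in> {v\<in>S'. pos v = i}" using v pS by auto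
      next
        fix v assume "v \<in> {v\<in>S'. pos v = i}" thus "v \<in> {v\<in>S. pos' v = i}" using S pS by auto
      qed
      thus ?thesis using Inv_card[OF I] 3 by simp
    qed
  qed
  have adjA: "(u,v) \<in> E \<longleftrightarrow> \<bar>pos' u - pos' v\<bar> \<le> 1" if u: "u \<in> A" and v: "v \<in> S" for u v
  proof -
    have "(u,v) \<in> E \<longleftrightarrow> v \<in> nbh E S u" using v by simp
    also have "\<dots> \<longleftrightarrow> v \<in> A \<or> (v \<in> S' \<and> pos v = lo)" using NA u by auto
    also have "\<dots> \<longleftrightarrow> \<bar>pos' u - pos' v\<bar> \<le> 1"
    proof -
      have "v \<in> S' \<or> v \<in> A \<or> v \<in> B" using v S by auto
      thus ?thesis using pA[OF u] pA pB pS rng lh dAB dA by fastforce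
    qed
    finally show ?thesis .
  qed
  have adjB: "(u,v) \<in> E \<longleftrightarrow> \<bar>pos' u - pos' v\<bar> \<le> 1" if u: "u \<in> B" and v: "v \<in> S" for u v
  proof -
    have "(u,v) \<in> E \<longleftrightarrow> v \<in> nbh E S u" using v by simp
    also have "\<dots> \<longleftrightarrow> v \<in> B \<or> (v \<in> S' \<and> pos v = hi)" using NB u by auto
    also have "\<dots> \<longleftrightarrow> \<bar>pos' u - pos' v\<bar> \<le> 1"
    proof -
      have "v \<in> S' \<or> v \<in> A \<or> v \<in> B" using v S by auto
      thus ?thesis using pB[OF u] pA pB pS rng lh dAB dB by fastforce
    qed
    finally show ?thesis .
  qed
  have Adj: "(u,v) \<in> E \<longleftrightarrow> \<bar>pos' u - pos' v\<bar> \<le> 1" if u: "u \<in> S" and v: "v \<in> S" for u v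
  proof -
    consider "u \<in> A" | "u \<in> B" | "v \<in> A" | "v \<in> B" | "u \<in> S' \<and> v \<in> S'" using u v S by auto
    thus ?thesis
    proof cases
      case 1 thus ?thesis using adjA v by blast
    next
      case 2 thus ?thesis using adjB v by blast
    next
      case 3
      have "(v,u) \<in> E \<longleftrightarrow> \<bar>pos' v - pos' u\<bar> \<le> 1" using adjA[OF 3 u] .
      thus ?thesis using sE by (auto simp: abs_minus_commute)
    next
      case 4
      have "(v,u) \<in> E \<longleftrightarrow> \<bar>pos' v - pos' u\<bar> \<le> 1" using adjB[OF 4 u] .
      thus ?thesis using sE by (auto simp: abs_minus_commute)
    next
      case 5 thus ?thesis using Inv_adj[OF I] pS by auto
    qed
  qed
  show ?thesis unfolding pos'_def[symmetric] Inv_def using R C Adj by blast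
qed

lemma Inv_refl:
  assumes I: "Inv E S lo hi J pos"
  shows "Inv E S lo hi (lo + hi - J) (\<lambda>v. lo + hi - pos v)"
proof -
  have R: "\<forall>v\<in>S. lo \<le> lo + hi - pos v \<and> lo + hi - pos v \<le> hi" using Inv_range[OF I] by fastforce
  have C: "card {v\<in>S. lo + hi - pos v = i} = (if i = lo + hi - J then 2 else 1)" if "lo \<le> i" "i \<le> hi" for i
  proof -
    have "{v\<in>S. lo + hi - pos v = i} = {v\<in>S. pos v = lo + hi - i}" by auto
    moreover have "card {v\<in>S. pos v = lo + hi - i} = (if lo + hi - i = J then 2 else 1)"
      by (rule Inv_card[OF I]) (use that in auto)
    moreover have "(lo + hi - i = J) = (i = lo + hi - J)" by auto
    ultimately show ?thesis by simp
  qed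
  have A: "\<forall>u\<in>S. \<forall>v\<in>S. (u,v) \<in> E \<longleftrightarrow> \<bar>(lo + hi - pos u) - (lo + hi - pos v)\<bar> \<le> 1"
  proof (intro ballI)
    fix u v assume "u \<in> S" "v \<in> S"
    thus "(u,v) \<in> E \<longleftrightarrow> \<bar>(lo + hi - pos u) - (lo + hi - pos v)\<bar> \<le> 1"
      using Inv_adj[OF I] by (simp add: abs_minus_commute)
  qed
  show ?thesis unfolding Inv_def using R C A by blast
qed

lemma Inv_nbh_lo:
  assumes I: "Inv E S lo hi J pos" and p: "{v\<in>S. pos v = lo} = {p}"
  shows "nbh E S p = insert p {v\<in>S. pos v = lo + 1}"
proof -
  have pS: "p \<in> S" "pos p = lo" using p by auto
  have "nbh E S p = {w\<in>S. \<bar>pos p - pos w\<bar> \<le> 1}" by (rule Inv_nbh[OF I pS(1)])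
  also have "\<dots> = {w\<in>S. pos w = lo} \<union> {w\<in>S. pos w = lo + 1}"
    using pS(2) Inv_range[OF I] by fastforce
  also have "\<dots> = insert p {v\<in>S. pos v = lo + 1}" using p by auto
  finally show ?thesis .
qed

lemma Inv_dom_lo:
  assumes I: "Inv E S lo hi J pos" and v: "v \<in> S" "pos v = lo" and w: "w \<in> S" "pos w = lo + 1"
    and wd: "lo + 2 \<le> hi"
  shows "w \<noteq> v \<and> nbh E S v \<subset> nbh E S w"
proof -
  obtain u where u: "u \<in> S" "pos u = lo + 2" using Inv_fiber_ne[OF I, of "lo+2"] wd by auto
  have "nbh E S v \<subseteq> nbh E S w"
    using Inv_nbh[OF I v(1)] Inv_nbh[OF I w(1)] v w Inv_range[OF I] by auto
  moreover have "u \<in> nbh E S w" "u \<notin> nbh E S v" using Inv_nbh[OF I] v w u by auto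
  ultimately show ?thesis using v w by auto
qed

lemma Inv_single_fib: "Inv E S lo hi J pos \<Longrightarrow> lo \<le> i \<Longrightarrow> i \<le> hi \<Longrightarrow> i \<noteq> J \<Longrightarrow> \<exists>v. {w\<in>S. pos w = i} = {v}"
  by (rule Inv_single)

lemma gen_single:
  assumes symE: "sym E" and refl: "\<forall>v\<in>S. (v,v)\<in>E" and fin: "finite S"
    and S': "S' = S - strict_corners E S" and I: "Inv E S' lo hi J pos"
    and wd: "lo + 2 \<le> hi" and J: "J \<noteq> lo" "J \<noteq> hi" "J \<noteq> lo - 1" "J \<noteq> hi + 1"
    and J2: "hi = lo + 2 \<longrightarrow> J \<noteq> lo + 1"
    and c: "card (strict_corners E S) \<le> 2"
  shows "card (strict_corners E S) = 2 \<and> (\<exists>pos'. Inv E S (lo - 1) (hi + 1) J pos')"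
proof -
  have Ir: "Inv E S' lo hi (lo + hi - J) (\<lambda>v. lo + hi - pos v)" by (rule Inv_refl[OF I])
  obtain p where p: "{w\<in>S'. pos w = lo} = {p}" using Inv_single[OF I, of lo] J wd by auto
  obtain q where q: "{w\<in>S'. pos w = hi} = {q}" using Inv_single[OF I, of hi] J wd by auto
  have q': "{w\<in>S'. lo + hi - pos w = lo} = {q}" using q by auto
  define P where "P = {v\<in>S'. pos v = lo + 1}"
  define Q where "Q = {v\<in>S'. pos v = hi - 1}"
  have Q': "Q = {v\<in>S'. lo + hi - pos v = lo + 1}" unfolding Q_def by auto
  have pS: "p \<in> S'" "pos p = lo" and qS: "q \<in> S'" "pos q = hi" using p q by auto
  have Np: "nbh E S' p = insert p P" unfolding P_def by (rule Inv_nbh_lo[OF I p])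
  have Nq: "nbh E S' q = insert q Q" unfolding Q' by (rule Inv_nbh_lo[OF Ir q'])
  have Pd: "\<forall>w\<in>P. w \<noteq> p \<and> nbh E S' p \<subset> nbh E S' w"
  proof
    fix w assume "w \<in> P"
    hence "w \<in> S'" "pos w = lo + 1" unfolding P_def by auto
    thus "w \<noteq> p \<and> nbh E S' p \<subset> nbh E S' w" by (rule Inv_dom_lo[OF I pS _ _ wd])
  qed
  have Qd: "\<forall>w\<in>Q. w \<noteq> q \<and> nbh E S' q \<subset> nbh E S' w"
  proof
    fix w assume "w \<in> Q"
    hence "w \<in> S'" "lo + hi - pos w = lo + 1" unfolding Q' by auto
    moreover have "lo + hi - pos q = lo" using qS by simp
    ultimately show "w \<noteq> q \<and> nbh E S' q \<subset> nbh E S' w" using Inv_dom_lo[OF Ir qS(1) _ _ _ wd] by blast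
  qed
  have Pne: "P \<noteq> {}" using Inv_fiber_ne[OF I, of "lo+1"] wd unfolding P_def by auto
  have Qne: "Q \<noteq> {}" using Inv_fiber_ne[OF I, of "hi - 1"] wd unfolding Q_def by auto
  have pq: "p \<noteq> q" "(p,q) \<notin> E"
  proof -
    show "p \<noteq> q" using pS(2) qS(2) wd by auto
    have "\<not> \<bar>pos p - pos q\<bar> \<le> 1" using pS(2) qS(2) wd by simp
    thus "(p,q) \<notin> E" using Inv_adj[OF I pS(1) qS(1)] by simp
  qed
  have PQ: "\<forall>w\<in>P\<inter>Q. P = {w} \<and> Q = {w}"
  proof
    fix w assume w: "w \<in> P \<inter> Q"
    hence "pos w = lo + 1" "pos w = hi - 1" unfolding P_def Q_def by auto
    hence e: "hi = lo + 2" by simp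
    hence ne: "lo + 1 \<noteq> J" using J2 by auto
    have r: "lo \<le> lo + 1" "lo + 1 \<le> hi" using wd by simp_all
    obtain v where v: "{x\<in>S'. pos x = lo + 1} = {v}" using Inv_single[OF I r ne] by blast
    have "Q = {x\<in>S'. pos x = lo + 1}" unfolding Q_def using e by (simp add: add.commute)
    hence "P = {v}" "Q = {v}" using v unfolding P_def by auto
    thus "P = {w} \<and> Q = {w}" using w by auto
  qed
  have S'': "S' = S - strict_corners E S" by (rule S')
  obtain a b where ab: "strict_corners E S = {a,b}" "a \<noteq> b" "nbh E S a = {a,p}" "nbh E S b = {b,q}"
    using step1core[OF symE refl fin S' pS(1) qS(1) pq Np Nq Pd Qd Pne Qne PQ c] by blast
  have scS: "strict_corners E S \<subseteq> S" by (auto simp: sc_mem)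
  have Seq: "S = S' \<union> {a} \<union> {b}" using S' scS ab(1) by auto
  have dis: "{a} \<inter> S' = {}" "{b} \<inter> S' = {}" "{a} \<inter> {b} = {}" using S' ab by auto
  have "Inv E S (lo - 1) (hi + 1) J (\<lambda>v. if v \<in> {a} then lo - 1 else if v \<in> {b} then hi + 1 else pos v)"
  proof (rule extG[OF symE I _ Seq dis])
    show "lo \<le> hi" using wd by simp
    show "card {a} = (if lo - 1 = J then 2 else 1)" using J by simp
    show "card {b} = (if hi + 1 = J then 2 else 1)" using J by simp
    show "\<forall>x\<in>{a}. nbh E S x = {a} \<union> {v\<in>S'. pos v = lo}" using ab(3) p by auto
    show "\<forall>x\<in>{b}. nbh E S x = {b} \<union> {v\<in>S'. pos v = hi}" using ab(4) q by auto
  qed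
  thus ?thesis using ab(1,2) by auto
qed


lemma Inv_changeJ:
  assumes I: "Inv E S lo hi J pos" and J: "J < lo \<or> hi < J" and J': "J' < lo \<or> hi < J'"
  shows "Inv E S lo hi J' pos"
proof -
  have "card {v\<in>S. pos v = i} = (if i = J' then 2 else 1)" if "lo \<le> i" "i \<le> hi" for i
    using Inv_card[OF I that] that J J' by auto
  thus ?thesis using I unfolding Inv_def by blast
qed

lemma double_ext:
  assumes symE: "sym E" and I: "Inv E S'' lo hi J pos" and J: "J = lo - 1" and lh: "lo \<le> hi"
    and fu: "{w\<in>S''. pos w = lo} = {u}" and fv: "{w\<in>S''. pos w = hi} = {v}"
    and S'e: "S' = S'' \<union> {a,t} \<union> {b}" and Se: "S = S' \<union> {d} \<union> {e}"
    and dis: "{a,t} \<inter> S'' = {}" "b \<notin> S''" "a \<noteq> t" "b \<noteq> a" "b \<noteq> t" "d \<notin> S'" "e \<notin> S'" "d \<noteq> e"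
    and Na: "nbh E S' a = {a,t,u}" and Nt: "nbh E S' t = {a,t,u}" and Nb: "nbh E S' b = {b,v}"
    and Nd: "nbh E S d = {d,a,t}" and Ne: "nbh E S e = {e,b}"
  shows "\<exists>pos'. Inv E S (lo - 2) (hi + 2) J pos'"
proof -
  define pos1 where "pos1 = (\<lambda>x. if x \<in> {a,t} then lo - 1 else if x \<in> {b} then hi + 1 else pos x)"
  have I1: "Inv E S' (lo - 1) (hi + 1) J pos1" unfolding pos1_def
  proof (rule extG[OF symE I lh S'e])
    show "{a,t} \<inter> S'' = {}" by (rule dis(1))
    show "{b} \<inter> S'' = {}" using dis by auto
    show "{a,t} \<inter> {b} = {}" using dis by auto
    show "card {a,t} = (if lo - 1 = J then 2 else 1)" using J dis by simp
    show "card {b} = (if hi + 1 = J then 2 else 1)" using J lh by simp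
    show "\<forall>x\<in>{a,t}. nbh E S' x = {a,t} \<union> {v\<in>S''. pos v = lo}" using Na Nt fu by auto
    show "\<forall>x\<in>{b}. nbh E S' x = {b} \<union> {v\<in>S''. pos v = hi}" using Nb fv by auto
  qed
  have f1: "{x\<in>S'. pos1 x = lo - 1} = {a,t}"
  proof (intro equalityI subsetI)
    fix x assume x: "x \<in> {x\<in>S'. pos1 x = lo - 1}"
    show "x \<in> {a,t}"
    proof (rule ccontr)
      assume n: "x \<notin> {a,t}"
      show False
      proof (cases "x = b")
        case True thus False using x n lh by (simp add: pos1_def)
      next
        case False
        hence "x \<in> S''" "pos1 x = pos x" using x n S'e by (auto simp: pos1_def)
        thus False using x Inv_range[OF I] by fastforce
      qed
    qed
  next
    fix x assume "x \<in> {a,t}" thus "x \<in> {x\<in>S'. pos1 x = lo - 1}" using S'e by (auto simp: pos1_def)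
  qed
  have f2: "{x\<in>S'. pos1 x = hi + 1} = {b}"
  proof (intro equalityI subsetI)
    fix x assume x: "x \<in> {x\<in>S'. pos1 x = hi + 1}"
    show "x \<in> {b}"
    proof (rule ccontr)
      assume n: "x \<notin> {b}"
      show False
      proof (cases "x \<in> {a,t}")
        case True thus False using x n lh by (auto simp: pos1_def)
      next
        case False
        hence "x \<in> S''" "pos1 x = pos x" using x n S'e by (auto simp: pos1_def)
        thus False using x Inv_range[OF I] by fastforce
      qed
    qed
  next
    fix x assume "x \<in> {b}" thus "x \<in> {x\<in>S'. pos1 x = hi + 1}" using S'e dis by (auto simp: pos1_def)
  qed
  have lh1: "lo - 1 \<le> hi + 1" using lh by simp
  have "Inv E S (lo - 1 - 1) (hi + 1 + 1) J (\<lambda>x. if x \<in> {d} then lo - 1 - 1 else if x \<in> {e} then hi + 1 + 1 else pos1 x)"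
  proof (rule extG[OF symE I1 lh1 Se])
    show "{d} \<inter> S' = {}" "{e} \<inter> S' = {}" "{d} \<inter> {e} = {}" using dis by auto
    show "card {d} = (if lo - 1 - 1 = J then 2 else 1)" using J by simp
    show "card {e} = (if hi + 1 + 1 = J then 2 else 1)" using J lh by simp
    show "\<forall>x\<in>{d}. nbh E S x = {d} \<union> {v\<in>S'. pos1 v = lo - 1}" using Nd f1 by auto
    show "\<forall>x\<in>{e}. nbh E S x = {e} \<union> {v\<in>S'. pos1 v = hi + 1}" using Ne f2 by auto
  qed
  moreover have "lo - 1 - 1 = lo - 2" "hi + 1 + 1 = hi + 2" by simp_all
  ultimately show ?thesis by auto
qed

lemma gen_double:
  assumes symE: "sym E" and refl: "\<forall>v\<in>S. (v,v)\<in>E" and fin: "finite S"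
    and X0: "X0 = strict_corners E S" and S': "S' = S - X0"
    and X1: "X1 = strict_corners E S'" and S'': "S'' = S' - X1"
    and I: "Inv E S'' lo hi J pos" and J: "J = lo - 1" and wd: "lo + 2 \<le> hi"
    and c1: "card X1 = 3" and c0: "card X0 \<le> 2"
  shows "\<exists>pos'. Inv E S (lo - 2) (hi + 2) J pos'"
proof -
  have Ir0: "Inv E S'' lo hi (lo + hi - J) (\<lambda>v. lo + hi - pos v)" by (rule Inv_refl[OF I])
  have Ir: "Inv E S'' lo hi J (\<lambda>v. lo + hi - pos v)" by (rule Inv_changeJ[OF Ir0]) (use J wd in auto)
  have sE: "(x,y) \<in> E \<Longrightarrow> (y,x) \<in> E" for x y using symE by (auto dest: symD)
  have scsub: "strict_corners E T \<subseteq> T" for T by (auto simp: sc_mem)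
  have subs: "S'' \<subseteq> S'" "S' \<subseteq> S" "S' = S'' \<union> X1" "S = S' \<union> X0" "S'' \<inter> X1 = {}" "S' \<inter> X0 = {}"
    using scsub[of S] scsub[of S'] X0 X1 S' S'' by auto
  have finS': "finite S'" using fin subs finite_subset by blast
  have ne: "lo \<noteq> J" "hi \<noteq> J" "lo + 1 \<noteq> J" "hi - 1 \<noteq> J" using J wd by simp_all
  have r: "lo \<le> lo" "lo \<le> hi" "hi \<le> hi" "lo \<le> lo + 1" "lo + 1 \<le> hi" "lo \<le> hi - 1" "hi - 1 \<le> hi"
    using wd by simp_all
  obtain p where p: "{w\<in>S''. pos w = lo} = {p}" using Inv_single[OF I r(1,2) ne(1)] by blast
  obtain q where q: "{w\<in>S''. pos w = hi} = {q}" using Inv_single[OF I r(2,3) ne(2)] by blast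
  obtain p' where p': "{w\<in>S''. pos w = lo + 1} = {p'}" using Inv_single[OF I r(4,5) ne(3)] by blast
  obtain q' where q': "{w\<in>S''. pos w = hi - 1} = {q'}" using Inv_single[OF I r(6,7) ne(4)] by blast
  have pS: "p \<in> S''" "pos p = lo" "q \<in> S''" "pos q = hi" "p' \<in> S''" "pos p' = lo + 1" "q' \<in> S''" "pos q' = hi - 1"
    using p q p' q' by auto
  have rq: "{w\<in>S''. lo + hi - pos w = lo} = {q}"
  proof -
    have "{w\<in>S''. lo + hi - pos w = lo} = {w\<in>S''. pos w = hi}" by (rule Collect_cong) auto
    thus ?thesis using q by simp
  qed
  have rq': "{w\<in>S''. lo + hi - pos w = lo + 1} = {q'}"
  proof -
    have "{w\<in>S''. lo + hi - pos w = lo + 1} = {w\<in>S''. pos w = hi - 1}" by (rule Collect_cong) auto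
    thus ?thesis using q' by simp
  qed
  have Np: "nbh E S'' p = {p,p'}" using Inv_nbh_lo[OF I p] p' by simp
  have Nq: "nbh E S'' q = {q,q'}" using Inv_nbh_lo[OF Ir rq] rq' by simp
  have dp: "p' \<noteq> p \<and> nbh E S'' p \<subset> nbh E S'' p'" by (rule Inv_dom_lo[OF I pS(1,2,5,6) wd])
  have dq: "q' \<noteq> q \<and> nbh E S'' q \<subset> nbh E S'' q'"
    by (rule Inv_dom_lo[OF Ir pS(3) _ pS(7) _ wd]) (use pS in simp_all)
  have pq: "p \<noteq> q"
  proof
    assume "p = q" thus False using pS(2,4) wd by simp
  qed
  have nsc: "x \<in> S'' \<Longrightarrow> x \<notin> strict_corners E S'" for x unfolding S'' X1 by blast
  obtain xp where xp: "xp \<in> S' - S''" "(p,xp) \<in> E" "(p',xp) \<notin> E"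
    using priv_child[OF subs(1) pS(1) pS(5) conjunct1[OF dp] nsc[OF pS(1)] conjunct2[OF dp]] by blast
  obtain xq where xq: "xq \<in> S' - S''" "(q,xq) \<in> E" "(q',xq) \<notin> E"
    using priv_child[OF subs(1) pS(3) pS(7) conjunct1[OF dq] nsc[OF pS(3)] conjunct2[OF dq]] by blast
  have xpX: "xp \<in> X1" "xq \<in> X1" using xp(1) xq(1) subs by auto
  have domx: "\<exists>w\<in>S''. nbh E S' x \<subset> nbh E S' w" if x: "x \<in> X1" for x
  proof -
    obtain w where "w \<in> S' - strict_corners E S'" "nbh E S' x \<subset> nbh E S' w"
      using dom_exists[OF finS' x[unfolded X1]] by blast
    thus ?thesis using S'' X1 by blast
  qed
  have both: "w = p' \<and> w = q'" if x: "x \<in> X1" "(p,x) \<in> E" "(q,x) \<in> E" and w: "w \<in> S''" "nbh E S' x \<subset> nbh E S' w" for x w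
  proof -
    have xS': "x \<in> S'" using x subs by auto
    have "p \<in> S'" "q \<in> S'" using pS subs by auto
    hence "p \<in> nbh E S' x" "q \<in> nbh E S' x" using x(2,3) by (simp_all add: sE)
    hence "p \<in> nbh E S' w" "q \<in> nbh E S' w" using w(2) by blast+
    hence "(w,p) \<in> E" "(w,q) \<in> E" by auto
    hence "\<bar>pos w - pos p\<bar> \<le> 1" "\<bar>pos w - pos q\<bar> \<le> 1"
      using Inv_adj[OF I w(1) pS(1)] Inv_adj[OF I w(1) pS(3)] by auto
    hence "pos w = lo + 1" "hi = lo + 2" using pS(2,4) wd by auto
    hence "w = p'" "w = q'" using p' q' w(1) by auto
    thus ?thesis by simp
  qed
  have xpq: "(q,xp) \<notin> E"
  proof
    assume h: "(q,xp) \<in> E"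
    obtain w where w: "w \<in> S''" "nbh E S' xp \<subset> nbh E S' w" using domx[OF xpX(1)] by blast
    have "w = p'" using both[OF xpX(1) xp(2) h w] by blast
    moreover have "xp \<in> S'" using xpX(1) subs by auto
    hence "xp \<in> nbh E S' xp" using refl subs by auto
    hence "(w,xp) \<in> E" using w(2) by auto
    ultimately show False using xp(3) by simp
  qed
  have xqp: "(p,xq) \<notin> E"
  proof
    assume h: "(p,xq) \<in> E"
    obtain w where w: "w \<in> S''" "nbh E S' xq \<subset> nbh E S' w" using domx[OF xpX(2)] by blast
    have "w = q'" using both[OF xpX(2) h xq(2) w] by blast
    moreover have "xq \<in> S'" using xpX(2) subs by auto
    hence "xq \<in> nbh E S' xq" using refl subs by auto
    hence "(w,xq) \<in> E" using w(2) by auto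
    ultimately show False using xq(3) by simp
  qed
  interpret D: dset E S S' S'' X0 X1 p q p' q' xp xq
    by unfold_locales (use symE refl fin X0 S' X1 S'' pS pq Np Nq xpX xp xq xpq xqp c1 c0 in auto)
  obtain x3 d e where de: "x3 \<in> X1" "x3 \<noteq> xp" "x3 \<noteq> xq" "d \<in> X0" "e \<in> X0" "d \<noteq> e"
    and cases: "(X1 = {xp,x3,xq} \<and> X0 = {d,e} \<and> nbh E S' xp = {xp,x3,p} \<and> nbh E S' x3 = {xp,x3,p} \<and>
     nbh E S' xq = {xq,q} \<and> nbh E S d = {d,xp,x3} \<and> nbh E S e = {e,xq}) \<or>
    (X1 = {xq,x3,xp} \<and> X0 = {d,e} \<and> nbh E S' xq = {xq,x3,q} \<and> nbh E S' x3 = {xq,x3,q} \<and>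
     nbh E S' xp = {xp,p} \<and> nbh E S d = {d,xq,x3} \<and> nbh E S e = {e,xp})"
    using D.dcore by blast
  have dS': "d \<notin> S'" "e \<notin> S'" using de subs by auto
  have x3S: "x3 \<notin> S''" using de(1) subs by auto
  have xpS: "xp \<notin> S''" "xq \<notin> S''" using xp xq by auto
  have xpxq: "xp \<noteq> xq" using xpq xq(2) by auto
  show ?thesis
  proof (rule disjE[OF cases])
    assume h: "X1 = {xp,x3,xq} \<and> X0 = {d,e} \<and> nbh E S' xp = {xp,x3,p} \<and> nbh E S' x3 = {xp,x3,p} \<and>
     nbh E S' xq = {xq,q} \<and> nbh E S d = {d,xp,x3} \<and> nbh E S e = {e,xq}"
    show ?thesis
    proof (rule double_ext[OF symE I J _ p q])
      show "lo \<le> hi" using wd by simp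
      show "S' = S'' \<union> {xp,x3} \<union> {xq}" using h subs by auto
      show "S = S' \<union> {d} \<union> {e}" using h subs by auto
    qed (use h de dS' x3S xpS xpxq in auto)
  next
    assume h: "X1 = {xq,x3,xp} \<and> X0 = {d,e} \<and> nbh E S' xq = {xq,x3,q} \<and> nbh E S' x3 = {xq,x3,q} \<and>
     nbh E S' xp = {xp,p} \<and> nbh E S d = {d,xq,x3} \<and> nbh E S e = {e,xp}"
    have rp: "{w\<in>S''. lo + hi - pos w = hi} = {p}"
    proof -
      have "{w\<in>S''. lo + hi - pos w = hi} = {w\<in>S''. pos w = lo}" by (rule Collect_cong) auto
      thus ?thesis using p by simp
    qed
    show ?thesis
    proof (rule double_ext[OF symE Ir J _ rq rp])
      show "lo \<le> hi" using wd by simp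
      show "S' = S'' \<union> {xq,x3} \<union> {xp}" using h subs by auto
      show "S = S' \<union> {d} \<union> {e}" using h subs by auto
    qed (use h de dS' x3S xpS xpxq in auto)
  qed
qed

lemma Inv_intro:
  assumes "\<forall>v\<in>S. lo \<le> pos v \<and> pos v \<le> hi"
    "\<And>i. lo \<le> i \<Longrightarrow> i \<le> hi \<Longrightarrow> card {v\<in>S. pos v = i} = (if i = J then 2 else 1)"
    "\<And>u v. u \<in> S \<Longrightarrow> v \<in> S \<Longrightarrow> (u,v) \<in> E \<longleftrightarrow> \<bar>pos u - pos v\<bar> \<le> 1"
  shows "Inv E S lo hi J pos"
  unfolding Inv_def using assms by blast

lemma Inv_one:
  assumes cc: "(c,c) \<in> E" and J: "J \<noteq> l"
  shows "Inv E {c} l l J (\<lambda>_. l)"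
proof (rule Inv_intro)
  show "\<forall>v\<in>{c}. l \<le> l \<and> l \<le> l" by simp
next
  fix i assume "l \<le> i" "i \<le> l"
  hence i: "i = l" by simp
  have "{v\<in>{c}. l = i} = {c}" using i by simp
  thus "card {v\<in>{c}. l = i} = (if i = J then 2 else 1)" using i J by simp
next
  fix u v assume "u \<in> {c}" "v \<in> {c}"
  thus "(u,v) \<in> E \<longleftrightarrow> \<bar>l - l\<bar> \<le> 1" using cc by simp
qed

lemma Inv_edge:
  assumes r: "(p,p) \<in> E" "(q,q) \<in> E" "(p,q) \<in> E" "(q,p) \<in> E" and pq: "p \<noteq> q" and J: "J \<noteq> l" "J \<noteq> l + 1"
  shows "Inv E {p,q} l (l + 1) J (\<lambda>v. if v = p then l else l + 1)"
proof (rule Inv_intro)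
  show "\<forall>v\<in>{p,q}. l \<le> (if v = p then l else l + 1) \<and> (if v = p then l else l + 1) \<le> l + 1" by simp
next
  fix i assume i: "l \<le> i" "i \<le> l + 1"
  show "card {v\<in>{p,q}. (if v = p then l else l + 1) = i} = (if i = J then 2 else 1)"
  proof (cases "i = l")
    case True
    have "{v\<in>{p,q}. (if v = p then l else l + 1) = i} = {p}"
    proof (rule set_eqI)
      fix x show "x \<in> {v\<in>{p,q}. (if v = p then l else l + 1) = i} \<longleftrightarrow> x \<in> {p}" using True pq by auto
    qed
    thus ?thesis using True J by simp
  next
    case False
    hence i1: "i = l + 1" using i by simp
    have "{v\<in>{p,q}. (if v = p then l else l + 1) = i} = {q}"
    proof (rule set_eqI)
      fix x show "x \<in> {v\<in>{p,q}. (if v = p then l else l + 1) = i} \<longleftrightarrow> x \<in> {q}" using i1 pq by auto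
    qed
    thus ?thesis using i1 J by simp
  qed
next
  fix u v assume "u \<in> {p,q}" "v \<in> {p,q}"
  thus "(u,v) \<in> E \<longleftrightarrow> \<bar>(if u = p then l else l + 1) - (if v = p then l else l + 1)\<bar> \<le> 1"
    using r pq by auto
qed

lemma Inv_tri:
  assumes cl: "\<forall>v\<in>{s1,s2,s3}. \<forall>w\<in>{s1,s2,s3}. (v,w) \<in> E" and d: "s1 \<noteq> s2" "s1 \<noteq> s3" "s2 \<noteq> s3"
  shows "Inv E {s1,s2,s3} l (l + 1) l (\<lambda>v. if v = s3 then l + 1 else l)"
proof (rule Inv_intro)
  show "\<forall>v\<in>{s1,s2,s3}. l \<le> (if v = s3 then l + 1 else l) \<and> (if v = s3 then l + 1 else l) \<le> l + 1" by simp
next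
  fix i assume i: "l \<le> i" "i \<le> l + 1"
  show "card {v\<in>{s1,s2,s3}. (if v = s3 then l + 1 else l) = i} = (if i = l then 2 else 1)"
  proof (cases "i = l")
    case True
    have "{v\<in>{s1,s2,s3}. (if v = s3 then l + 1 else l) = i} = {s1,s2}"
    proof (rule set_eqI)
      fix x show "x \<in> {v\<in>{s1,s2,s3}. (if v = s3 then l + 1 else l) = i} \<longleftrightarrow> x \<in> {s1,s2}" using True d by auto
    qed
    thus ?thesis using True d by simp
  next
    case False
    hence i1: "i = l + 1" using i by simp
    have "{v\<in>{s1,s2,s3}. (if v = s3 then l + 1 else l) = i} = {s3}"
    proof (rule set_eqI)
      fix x show "x \<in> {v\<in>{s1,s2,s3}. (if v = s3 then l + 1 else l) = i} \<longleftrightarrow> x \<in> {s3}" using i1 d by auto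
    qed
    thus ?thesis using i1 by simp
  qed
next
  fix u v assume "u \<in> {s1,s2,s3}" "v \<in> {s1,s2,s3}"
  moreover have "\<bar>(if u = s3 then l + 1 else l) - (if v = s3 then l + 1 else l)\<bar> \<le> 1" by auto
  ultimately show "(u,v) \<in> E \<longleftrightarrow> \<bar>(if u = s3 then l + 1 else l) - (if v = s3 then l + 1 else l)\<bar> \<le> 1"
    using cl by blast
qed

context one_lev
begin

lemma wrap_top1:
  assumes Sc: "S' = {c}" and c2: "card X = 2" and J: "J \<noteq> l - 1" "J \<noteq> l + 1" "J \<noteq> l"
  shows "\<exists>pos'. Inv E S (l - 1) (l + 1) J pos'"
proof -
  obtain a b where ab: "X = {a,b}" "a \<noteq> b" "nbh E S a = {a,c}" "nbh E S b = {b,c}"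
    using top1[OF Sc c2] by blast
  have cc: "(c,c) \<in> E" using Sc by (simp add: S'S rS)
  have I: "Inv E S' l l J (\<lambda>_. l)" unfolding Sc by (rule Inv_one[OF cc J(3)])
  have "Inv E S (l - 1) (l + 1) J (\<lambda>v. if v \<in> {a} then l - 1 else if v \<in> {b} then l + 1 else l)"
  proof (rule extG[OF symE I])
    show "S = S' \<union> {a} \<union> {b}" using subs(3) ab by auto
    show "{a} \<inter> S' = {}" "{b} \<inter> S' = {}" "{a} \<inter> {b} = {}" using subs(4) ab by auto
    show "card {a} = (if l - 1 = J then 2 else 1)" "card {b} = (if l + 1 = J then 2 else 1)" using J by auto
    show "\<forall>x\<in>{a}. nbh E S x = {a} \<union> {v\<in>S'. l = l}" using ab Sc by auto
    show "\<forall>x\<in>{b}. nbh E S x = {b} \<union> {v\<in>S'. l = l}" using ab Sc by auto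
  qed simp
  thus ?thesis by blast
qed

lemma wrap_top2:
  assumes Spq: "S' = {p,q}" and pq: "p \<noteq> q" "(p,q) \<in> E" and c2: "card X = 2"
    and T0: "\<forall>v\<in>S'. \<exists>u\<in>S. (v,u) \<notin> E" and J: "J \<noteq> l - 1" "J \<noteq> l + 2" "J \<noteq> l" "J \<noteq> l + 1"
  shows "\<exists>pos'. Inv E S (l - 1) (l + 2) J pos'"
proof -
  obtain a b where ab: "X = {a,b}" "a \<noteq> b" "nbh E S a = {a,p}" "nbh E S b = {b,q}"
    using top2[OF Spq pq c2 T0] by blast
  have rr: "(p,p) \<in> E" "(q,q) \<in> E" using Spq by (simp_all add: S'S rS)
  have I: "Inv E S' l (l + 1) J (\<lambda>v. if v = p then l else l + 1)"
    unfolding Spq by (rule Inv_edge[OF rr pq(2) sE[OF pq(2)] pq(1) J(3,4)])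
  have "Inv E S (l - 1) (l + 1 + 1) J (\<lambda>v. if v \<in> {a} then l - 1 else if v \<in> {b} then l + 1 + 1 else (if v = p then l else l + 1))"
  proof (rule extG[OF symE I])
    show "S = S' \<union> {a} \<union> {b}" using subs(3) ab by auto
    show "{a} \<inter> S' = {}" "{b} \<inter> S' = {}" "{a} \<inter> {b} = {}" using subs(4) ab by auto
    show "card {a} = (if l - 1 = J then 2 else 1)" "card {b} = (if l + 1 + 1 = J then 2 else 1)" using J by auto
    show "\<forall>x\<in>{a}. nbh E S x = {a} \<union> {v\<in>S'. (if v = p then l else l + 1) = l}" using ab Spq by auto
    show "\<forall>x\<in>{b}. nbh E S x = {b} \<union> {v\<in>S'. (if v = p then l else l + 1) = l + 1}" using ab Spq pq by auto
  qed simp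
  moreover have "l + 1 + 1 = l + 2" by simp
  ultimately show ?thesis by auto
qed

lemma wrap_top3:
  assumes S3: "S' = {u1,u2,u3}" and d: "u1 \<noteq> u2" "u1 \<noteq> u3" "u2 \<noteq> u3"
    and cl: "\<forall>v\<in>S'. \<forall>w\<in>S'. (v,w) \<in> E" and c2: "card X = 2"
    and T0: "\<forall>v\<in>S'. \<exists>u\<in>S. (v,u) \<notin> E"
  shows "\<exists>pos'. Inv E S (l - 1) (l + 2) l pos'"
proof -
  obtain a b s1 s2 s3 where H: "S' = {s1,s2,s3}" "s1 \<noteq> s2" "s1 \<noteq> s3" "s2 \<noteq> s3"
    "X = {a,b}" "a \<noteq> b" "nbh E S a = {a,s1,s2}" "nbh E S b = {b,s3}"
    using top3[OF S3 d cl c2 T0] by blast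
  have I: "Inv E S' l (l + 1) l (\<lambda>v. if v = s3 then l + 1 else l)"
    unfolding H(1) by (rule Inv_tri) (use cl H in auto)
  have f1: "{v\<in>S'. (if v = s3 then l + 1 else l) = l} = {s1,s2}" using H by auto
  have f2: "{v\<in>S'. (if v = s3 then l + 1 else l) = l + 1} = {s3}" using H by auto
  have "Inv E S (l - 1) (l + 1 + 1) l (\<lambda>v. if v \<in> {a} then l - 1 else if v \<in> {b} then l + 1 + 1 else (if v = s3 then l + 1 else l))"
  proof (rule extG[OF symE I])
    show "S = S' \<union> {a} \<union> {b}" using subs(3) H by auto
    show "{a} \<inter> S' = {}" "{b} \<inter> S' = {}" "{a} \<inter> {b} = {}" using subs(4) H by auto
    show "card {a} = (if l - 1 = l then 2 else 1)" "card {b} = (if l + 1 + 1 = l then 2 else 1)" by auto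
    show "\<forall>x\<in>{a}. nbh E S x = {a} \<union> {v\<in>S'. (if v = s3 then l + 1 else l) = l}" unfolding f1 using H by auto
    show "\<forall>x\<in>{b}. nbh E S x = {b} \<union> {v\<in>S'. (if v = s3 then l + 1 else l) = l + 1}" unfolding f2 using H by auto
  qed simp
  moreover have "l + 1 + 1 = l + 2" by simp
  ultimately show ?thesis by auto
qed

end

context two_lev
begin

lemma wrap_dtop1:
  assumes Sc: "S'' = {c}" and c0: "card X0 = 2" and c1: "card X1 = 3" and J: "J = l - 1"
  shows "\<exists>pos'. Inv E S (l - 2) (l + 2) J pos'"
proof -
  obtain a t b d e where H: "X1 = {a,t,b}" "a \<noteq> t" "a \<noteq> b" "t \<noteq> b" "X0 = {d,e}" "d \<noteq> e"
    "nbh E S' a = {a,t,c}" "nbh E S' t = {a,t,c}" "nbh E S' b = {b,c}"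
    "nbh E S d = {d,a,t}" "nbh E S e = {e,b}"
    using dtop1[OF Sc c0 c1] by blast
  have cc: "(c,c) \<in> E" using Sc by (simp add: S''S' rS')
  have I: "Inv E S'' l l J (\<lambda>_. l)" unfolding Sc by (rule Inv_one[OF cc]) (use J in simp)
  show ?thesis
  proof (rule double_ext[OF symE I J])
    show "{w\<in>S''. l = l} = {c}" "{w\<in>S''. l = l} = {c}" using Sc by auto
    show "S' = S'' \<union> {a,t} \<union> {b}" using subs(6) H(1) by auto
    show "S = S' \<union> {d} \<union> {e}" using subs(5) H(5) by auto
    show "{a,t} \<inter> S'' = {}" "b \<notin> S''" using subs(8) H(1) by auto
    show "d \<notin> S'" "e \<notin> S'" using subs(7) H(5) by auto
  qed (use H in auto)
qed

lemma wrap_dtop2: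
  assumes Spq: "S'' = {p,q}" and pq: "p \<noteq> q" "(p,q) \<in> E" and c0: "card X0 \<le> 2" and c1: "card X1 = 3"
    and T0: "\<forall>v\<in>S''. \<exists>u\<in>S'. (v,u) \<notin> E" and J: "J = l - 1"
  shows "\<exists>pos'. Inv E S (l - 2) (l + 3) J pos'"
proof -
  have pS: "p \<in> S''" "q \<in> S''" using Spq by auto
  have qp: "(q,p) \<in> E" using sE[OF pq(2)] .
  have rr: "(p,p) \<in> E" "(q,q) \<in> E" using pS by (simp_all add: S''S' rS')
  have Np: "nbh E S'' p = {p,q}" using Spq rr pq by auto
  have Nq: "nbh E S'' q = {q,p}" using Spq rr qp by auto
  have finX1: "finite X1" using finS' subs finite_subset by blast
  have priv: "\<exists>x\<in>X1. (u,x) \<in> E \<and> (w,x) \<notin> E" if uw: "{u,w} = {p,q}" "u \<noteq> w" for u w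
  proof (rule ccontr)
    assume H: "\<not> ?thesis"
    have uS: "u \<in> S''" "w \<in> S''" using uw Spq by auto
    have "(u = p \<and> w = q) \<or> (u = q \<and> w = p)" using uw by (metis doubleton_eq_iff)
    hence uw': "(u,w) \<in> E" "(w,u) \<in> E" using pq qp by auto
    have sub: "nbh E S' u \<subseteq> nbh E S' w"
    proof
      fix y assume y: "y \<in> nbh E S' u"
      show "y \<in> nbh E S' w"
      proof (cases "y \<in> S''")
        case True
        hence "y = u \<or> y = w" using Spq uw by auto
        thus ?thesis using y uS uw' rr Spq S''S' by auto
      next
        case False
        hence "y \<in> X1" using y subs by auto
        thus ?thesis using H y by auto
      qed
    qed
    have eq: "nbh E S' u = nbh E S' w"
    proof (rule ccontr)
      assume "nbh E S' u \<noteq> nbh E S' w"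
      hence "nbh E S' u \<subset> nbh E S' w" using sub by auto
      thus False using notsc'[OF uS(1) S''S'[OF uS(2)]] uw(2) by auto
    qed
    obtain y where y: "y \<in> S'" "(w,y) \<notin> E" using T0 uS(2) by blast
    have yX: "y \<in> X1"
    proof (rule ccontr)
      assume "y \<notin> X1"
      hence "y \<in> S''" using y(1) subs by auto
      hence "y = u \<or> y = w" using Spq uw by auto
      thus False using y(2) uw' rr Spq uw by auto
    qed
    have uy: "(u,y) \<notin> E" using eq y by auto
    obtain v where v: "v \<in> S''" "nbh E S' y \<subset> nbh E S' v" using dom1[OF yX] by blast
    have "y \<in> nbh E S' y" using y(1) by (simp add: rS')
    hence "(v,y) \<in> E" using v(2) by auto
    moreover have "v = u \<or> v = w" using v(1) Spq uw by auto
    ultimately show False using uy y(2) by auto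
  qed
  obtain xp where xp: "xp \<in> X1" "(p,xp) \<in> E" "(q,xp) \<notin> E" using priv[of p q] pq by auto
  obtain xq where xq: "xq \<in> X1" "(q,xq) \<in> E" "(p,xq) \<notin> E" using priv[of q p] pq by auto
  interpret D: dset E S S' S'' X0 X1 p q q p xp xq
    by unfold_locales (use symE refl fin X0 S' X1 S'' pS pq Np Nq xp xq c1 c0 in auto)
  obtain x3 d e where de: "x3 \<in> X1" "x3 \<noteq> xp" "x3 \<noteq> xq" "d \<in> X0" "e \<in> X0" "d \<noteq> e"
    and cases: "(X1 = {xp,x3,xq} \<and> X0 = {d,e} \<and> nbh E S' xp = {xp,x3,p} \<and> nbh E S' x3 = {xp,x3,p} \<and>
     nbh E S' xq = {xq,q} \<and> nbh E S d = {d,xp,x3} \<and> nbh E S e = {e,xq}) \<or>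
    (X1 = {xq,x3,xp} \<and> X0 = {d,e} \<and> nbh E S' xq = {xq,x3,q} \<and> nbh E S' x3 = {xq,x3,q} \<and>
     nbh E S' xp = {xp,p} \<and> nbh E S d = {d,xq,x3} \<and> nbh E S e = {e,xp})"
    using D.dcore by blast
  have dS': "d \<notin> S'" "e \<notin> S'" using de subs by auto
  have x3S: "x3 \<notin> S''" using de(1) subs by auto
  have xpS: "xp \<notin> S''" "xq \<notin> S''" using xp xq subs by auto
  have xpxq: "xp \<noteq> xq" using xp(3) xq(2) by auto
  have J1: "J \<noteq> l" "J \<noteq> l + 1" using J by auto
  have I1: "Inv E S'' l (l + 1) J (\<lambda>v. if v = p then l else l + 1)"
    unfolding Spq by (rule Inv_edge[OF rr pq(2) qp pq(1) J1])
  have I2: "Inv E S'' l (l + 1) J (\<lambda>v. if v = q then l else l + 1)"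
    unfolding Spq using Inv_edge[OF rr(2,1) qp pq(2) pq(1)[symmetric] J1] by (simp add: insert_commute)
  have e3: "l + 1 + 2 = l + 3" by simp
  show ?thesis
  proof (rule disjE[OF cases])
    assume h: "X1 = {xp,x3,xq} \<and> X0 = {d,e} \<and> nbh E S' xp = {xp,x3,p} \<and> nbh E S' x3 = {xp,x3,p} \<and>
     nbh E S' xq = {xq,q} \<and> nbh E S d = {d,xp,x3} \<and> nbh E S e = {e,xq}"
    have "\<exists>pos'. Inv E S (l - 2) (l + 1 + 2) J pos'"
    proof (rule double_ext[OF symE I1 J])
      show "l \<le> l + 1" by simp
      show "{w\<in>S''. (if w = p then l else l + 1) = l} = {p}" using Spq pq by auto
      show "{w\<in>S''. (if w = p then l else l + 1) = l + 1} = {q}" using Spq pq by auto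
      show "S' = S'' \<union> {xp,x3} \<union> {xq}" using h subs by auto
      show "S = S' \<union> {d} \<union> {e}" using h subs by auto
    qed (use h de dS' x3S xpS xpxq in auto)
    thus ?thesis unfolding e3 .
  next
    assume h: "X1 = {xq,x3,xp} \<and> X0 = {d,e} \<and> nbh E S' xq = {xq,x3,q} \<and> nbh E S' x3 = {xq,x3,q} \<and>
     nbh E S' xp = {xp,p} \<and> nbh E S d = {d,xq,x3} \<and> nbh E S e = {e,xp}"
    have "\<exists>pos'. Inv E S (l - 2) (l + 1 + 2) J pos'"
    proof (rule double_ext[OF symE I2 J])
      show "l \<le> l + 1" by simp
      show "{w\<in>S''. (if w = q then l else l + 1) = l} = {q}" using Spq pq by auto
      show "{w\<in>S''. (if w = q then l else l + 1) = l + 1} = {p}" using Spq pq by auto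
      show "S' = S'' \<union> {xq,x3} \<union> {xp}" using h subs by auto
      show "S = S' \<union> {d} \<union> {e}" using h subs by auto
    qed (use h de dS' x3S xpS xpxq in auto)
    thus ?thesis unfolding e3 .
  qed
qed

end

lemma card1_obtain: assumes "card A = 1" obtains c where "A = {c}"
  using assms by (rule card_1_singletonE)

lemma card2_obtain: assumes "card A = 2" obtains p q where "A = {p,q}" "p \<noteq> q"
  using assms by (auto simp: card_2_iff)

lemma card3_obtain: assumes "card A = 3" obtains u1 u2 u3 where "A = {u1,u2,u3}" "u1 \<noteq> u2" "u1 \<noteq> u3" "u2 \<noteq> u3"
  using assms by (auto simp: card_3_iff)

lemma charA:
  assumes gr: "graph V E" and cw: "cop_win V E" and cr: "corner_rank V E = \<alpha> + 1 + s"
    and a2: "2 \<le> \<alpha>" and j1: "1 < j" and ja: "j \<le> \<alpha>"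
    and lev: "\<And>i. 1 \<le> i \<Longrightarrow> i \<le> \<alpha> \<Longrightarrow> card (rank_set V E (i + s)) = (if i = j then 3 else 2)"
    and top: "card (rank_set V E (\<alpha> + 1 + s)) = 1"
  shows "\<exists>pos. Inv E (remaining V E s) 1 (2 * int \<alpha> + 1) (int j) pos"
proof -
  have fin: "finite V" and symE: "sym E" and reflV: "\<forall>v\<in>V. (v,v)\<in>E" using gr by (auto simp: graph_def)
  define R where "R k = remaining V E k" for k
  have m0: "m0 V E = \<alpha> + s" using cr_eq[OF cw] cr by simp
  have Rsub: "R k \<subseteq> V" for k unfolding R_def by (rule rem_sub)
  have finR: "finite (R k)" for k using fin Rsub finite_subset by blast
  have reflR: "\<forall>v\<in>R k. (v,v)\<in>E" for k using reflV Rsub by blast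
  have step: "R (Suc k) = R k - strict_corners E (R k)" if "k < \<alpha> + s" for k
    unfolding R_def using rem_step[OF cw] that m0 by simp
  have rs: "rank_set V E (Suc k) = strict_corners E (R k)" if "k < \<alpha> + s" for k
    unfolding R_def using rank_set_lt[OF cw, of "Suc k"] that cr by simp
  have rtop: "rank_set V E (\<alpha> + 1 + s) = R (\<alpha> + s)" using rank_set_top[OF cw] cr m0 unfolding R_def by simp
  have levk: "card (strict_corners E (R k)) = (if Suc k = j + s then 3 else 2)" if "s \<le> k" "k < \<alpha> + s" for k
  proof -
    have "card (rank_set V E ((Suc k - s) + s)) = (if Suc k - s = j then 3 else 2)"
      by (rule lev) (use that in auto)
    moreover have "Suc k - s + s = Suc k" using that by simp
    moreover have "(Suc k - s = j) = (Suc k = j + s)" using that by auto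
    ultimately show ?thesis using rs[OF that(2)] by simp
  qed
  define n where "n = 2 * int \<alpha> + 1"
  define Q where "Q k = (\<exists>pos. Inv E (R (k + s)) (int k + 1) (n - int k) (int j) pos)" for k
  have main: "k \<le> \<alpha> \<Longrightarrow> k + 1 \<noteq> j \<Longrightarrow> Q k" for k
  proof (induction "\<alpha> - k" arbitrary: k rule: less_induct)
    case less
    consider (a) "k = \<alpha>" | (b) "k + 1 = \<alpha>" | (c) "k + 2 = j" "k + 1 < \<alpha>" | (d) "k + 2 \<noteq> j" "k + 1 < \<alpha>"
      using less.prems by linarith
    thus ?case
    proof cases
      case a
      have "card (R (\<alpha> + s)) = 1" using top rtop by simp
      then obtain c where c: "R (\<alpha> + s) = {c}" by (rule card1_obtain)
      have cc: "(c,c) \<in> E" using reflR[of "\<alpha> + s"] c by auto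
      have "Inv E {c} (int \<alpha> + 1) (int \<alpha> + 1) (int j) (\<lambda>_. int \<alpha> + 1)"
        by (rule Inv_one[OF cc]) (use ja in simp)
      moreover have "n - int \<alpha> = int \<alpha> + 1" by (simp add: n_def)
      ultimately show ?thesis unfolding Q_def a c by auto
    next
      case b
      define S where "S = R (k + s)"
      have e: "\<alpha> + s = Suc (k + s)" using b by simp
      have S': "R (\<alpha> + s) = S - strict_corners E S"
        unfolding S_def e using step[of "k + s"] b by simp
      interpret O: one_lev E S "R (\<alpha> + s)" "strict_corners E S"
        by unfold_locales (use symE reflR finR S' in \<open>auto simp: S_def\<close>)
      have "card (R (\<alpha> + s)) = 1" using top rtop by simp
      then obtain c where c: "R (\<alpha> + s) = {c}" by (rule card1_obtain)
      have c2: "card (strict_corners E S) = 2" unfolding S_def using levk[of "k + s"] b less.prems by simp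
      have "\<exists>pos. Inv E S (int \<alpha> + 1 - 1) (int \<alpha> + 1 + 1) (int j) pos"
        by (rule O.wrap_top1[OF c c2]) (use ja b less.prems in auto)
      then obtain pos where I: "Inv E S (int \<alpha> + 1 - 1) (int \<alpha> + 1 + 1) (int j) pos" by blast
      moreover have "int \<alpha> + 1 - 1 = int k + 1" "int \<alpha> + 1 + 1 = n - int k" using b by (auto simp: n_def)
      ultimately show ?thesis unfolding Q_def S_def by auto
    next
      case c
      define S where "S = R (k + s)"
      define S' where "S' = R (Suc (k + s))"
      define S'' where "S'' = R (Suc (Suc (k + s)))"
      have S'e: "S' = S - strict_corners E S" unfolding S_def S'_def using step[of "k + s"] c by simp
      have S''e: "S'' = S' - strict_corners E S'" unfolding S'_def S''_def using step[of "Suc (k + s)"] c by simp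
      have c0: "card (strict_corners E S) = 2" unfolding S_def using levk[of "k + s"] c by simp
      have c1: "card (strict_corners E S') = 3" unfolding S'_def using levk[of "Suc (k + s)"] c by simp
      interpret T: two_lev E S S' S'' "strict_corners E S" "strict_corners E S'"
        by unfold_locales (use symE reflR finR S'e S''e in \<open>auto simp: S_def\<close>)
      show ?thesis
      proof (cases "j = \<alpha>")
        case True
        have ct: "card (R (\<alpha> + s)) = 1" using top rtop by simp
        have e2: "Suc (Suc (k + s)) = \<alpha> + s" using c True by simp
        have "card S'' = 1" unfolding S''_def e2 by (rule ct)
        then obtain c' where c': "S'' = {c'}" by (rule card1_obtain)
        obtain pos where I: "Inv E S (int \<alpha> + 1 - 2) (int \<alpha> + 1 + 2) (int j) pos"
          using T.wrap_dtop1[OF c' c0 c1, of "int j" "int \<alpha> + 1"] True by auto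
        moreover have "int \<alpha> + 1 - 2 = int k + 1" "int \<alpha> + 1 + 2 = n - int k" using c True by (auto simp: n_def)
        ultimately show ?thesis unfolding Q_def S_def by auto
      next
        case False
        have "Q j" by (rule less.hyps) (use c False ja in auto)
        then obtain pos where I: "Inv E (R (j + s)) (int j + 1) (n - int j) (int j) pos" unfolding Q_def by blast
        have e3: "j + s = Suc (Suc (k + s))" using c by simp
        have e: "R (j + s) = S''" unfolding S''_def e3 by (rule refl)
        have I': "Inv E S'' (int j + 1) (n - int j) (int j) pos" using I e by simp
        have J: "int j = int j + 1 - 1" by simp
        have wd: "int j + 1 + 2 \<le> n - int j" using False ja by (simp add: n_def)
        have c0': "card (strict_corners E S) \<le> 2" using c0 by simp
        obtain pos' where "Inv E S (int j + 1 - 2) (n - int j + 2) (int j) pos'"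
          using gen_double[OF symE reflR[of "k + s", folded S_def] finR[of "k + s", folded S_def]
            refl S'e refl S''e I' J wd c1 c0'] by blast
        moreover have "int j + 1 - 2 = int k + 1" "n - int j + 2 = n - int k" using c by auto
        ultimately show ?thesis unfolding Q_def S_def by auto
      qed
    next
      case d
      define S where "S = R (k + s)"
      define S' where "S' = R (Suc (k + s))"
      have S'e: "S' = S - strict_corners E S" unfolding S_def S'_def using step[of "k + s"] d by simp
      have "Q (k + 1)" by (rule less.hyps) (use d less.prems in auto)
      then obtain pos where I: "Inv E (R (k + 1 + s)) (int (k + 1) + 1) (n - int (k + 1)) (int j) pos"
        unfolding Q_def by blast
      have e4: "n - int (k + 1) = n - int k - 1" "int (k + 1) + 1 = int k + 2" "k + 1 + s = Suc (k + s)" by simp_all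
      have I': "Inv E S' (int k + 2) (n - int k - 1) (int j) pos" using I[unfolded e4] unfolding S'_def .
      have c2: "card (strict_corners E S) \<le> 2" unfolding S_def using levk[of "k + s"] d less.prems by simp
      have wd: "int k + 2 + 2 \<le> n - int k - 1" using d by (simp add: n_def)
      have J: "int j \<noteq> int k + 2" "int j \<noteq> n - int k - 1" "int j \<noteq> int k + 2 - 1" "int j \<noteq> n - int k - 1 + 1"
        "n - int k - 1 = int k + 2 + 2 \<longrightarrow> int j \<noteq> int k + 2 + 1"
        using d less.prems ja by (auto simp: n_def)
      obtain pos' where "Inv E S (int k + 2 - 1) (n - int k - 1 + 1) (int j) pos'"
        using gen_single[OF symE reflR[of "k + s", folded S_def] finR[of "k + s", folded S_def] S'e I' wd J c2]
        by blast
      moreover have "int k + 2 - 1 = int k + 1" "n - int k - 1 + 1 = n - int k" by simp_all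
      ultimately show ?thesis unfolding Q_def S_def by auto
    qed
  qed
  have "Q 0" by (rule main) (use j1 in auto)
  thus ?thesis unfolding Q_def R_def n_def by simp
qed

lemma Inv_eq: "Inv E S lo hi J pos \<Longrightarrow> lo = lo' \<Longrightarrow> hi = hi' \<Longrightarrow> Inv E S lo' hi' J pos"
  by simp

lemma charB:
  assumes gr: "graph V E" and cw: "cop_win V E" and cr: "corner_rank V E = \<alpha> + s"
    and a2: "2 \<le> \<alpha>" and j1: "1 < j" and ja: "j \<le> \<alpha>"
    and lev: "\<And>i. 1 \<le> i \<Longrightarrow> i \<le> \<alpha> \<Longrightarrow> card (rank_set V E (i + s)) = (if i = j then 3 else 2)"
    and T0: "\<forall>v\<in>rank_set V E (\<alpha> + s). \<exists>u\<in>remaining V E (\<alpha> + s - 2). (v,u) \<notin> E"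
  shows "\<exists>pos. Inv E (remaining V E s) 1 (2 * int \<alpha>) (int j) pos"
proof -
  have fin: "finite V" and symE: "sym E" and reflV: "\<forall>v\<in>V. (v,v)\<in>E" using gr by (auto simp: graph_def)
  have sE: "(x,y) \<in> E \<Longrightarrow> (y,x) \<in> E" for x y using symE by (auto dest: symD)
  define R where "R k = remaining V E k" for k
  have m0: "m0 V E = \<alpha> + s - 1" using cr_eq[OF cw] cr by simp
  have Rsub: "R k \<subseteq> V" for k unfolding R_def by (rule rem_sub)
  have finR: "finite (R k)" for k using fin Rsub finite_subset by blast
  have reflR: "\<forall>v\<in>R k. (v,v)\<in>E" for k using reflV Rsub by blast
  have step: "R (Suc k) = R k - strict_corners E (R k)" if "k < \<alpha> + s - 1" for k
    unfolding R_def using rem_step[OF cw] that m0 by simp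
  have rs: "rank_set V E (Suc k) = strict_corners E (R k)" if "k < \<alpha> + s - 1" for k
    unfolding R_def using rank_set_lt[OF cw, of "Suc k"] that cr by simp
  have rtop: "rank_set V E (\<alpha> + s) = R (\<alpha> + s - 1)" using rank_set_top[OF cw] cr m0 unfolding R_def by simp
  have clq: "is_clique E (R (\<alpha> + s - 1))" using m0_clique[OF cw] m0 unfolding R_def by simp
  have levk: "card (strict_corners E (R k)) = (if Suc k = j + s then 3 else 2)" if "s \<le> k" "k < \<alpha> + s - 1" for k
  proof -
    have "card (rank_set V E ((Suc k - s) + s)) = (if Suc k - s = j then 3 else 2)"
      by (rule lev) (use that in auto)
    moreover have "Suc k - s + s = Suc k" using that by simp
    moreover have "(Suc k - s = j) = (Suc k = j + s)" using that by auto
    ultimately show ?thesis using rs[OF that(2)] by simp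
  qed
  have ctop: "card (R (\<alpha> + s - 1)) = (if \<alpha> = j then 3 else 2)" using lev[of \<alpha>] a2 rtop by simp
  have T0': "\<forall>v\<in>R (\<alpha> + s - 1). \<exists>u\<in>R (\<alpha> + s - 2). (v,u) \<notin> E" using T0 rtop unfolding R_def by simp
  define n where "n = 2 * int \<alpha>"
  define Q where "Q k = (\<exists>pos. Inv E (R (k + s)) (int k + 1) (n - int k) (int j) pos)" for k
  have main: "k + 1 \<le> \<alpha> \<Longrightarrow> k + 1 \<noteq> j \<Longrightarrow> Q k" for k
  proof (induction "\<alpha> - k" arbitrary: k rule: less_induct)
    case less
    consider (a) "k + 1 = \<alpha>" | (b) "k + 2 = \<alpha>" | (c) "k + 2 = j" "k + 2 < \<alpha>" | (d) "k + 2 \<noteq> j" "k + 2 < \<alpha>"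
      using less.prems by linarith
    thus ?case
    proof cases
      case a
      have e: "\<alpha> + s - 1 = k + s" using a by simp
      have "card (R (k + s)) = 2" using ctop less.prems a e by simp
      then obtain p q where pq: "R (k + s) = {p,q}" "p \<noteq> q" by (rule card2_obtain)
      have cl: "\<forall>v\<in>R (k + s). \<forall>w\<in>R (k + s). (v,w) \<in> E" using clq e unfolding is_clique_def by simp
      have r: "(p,p) \<in> E" "(q,q) \<in> E" "(p,q) \<in> E" "(q,p) \<in> E" using cl pq by auto
      have I: "Inv E {p,q} (int \<alpha>) (int \<alpha> + 1) (int j) (\<lambda>v. if v = p then int \<alpha> else int \<alpha> + 1)"
        by (rule Inv_edge[OF r pq(2)]) (use less.prems a ja in auto)
      have "Inv E {p,q} (int k + 1) (n - int k) (int j) (\<lambda>v. if v = p then int \<alpha> else int \<alpha> + 1)"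
        by (rule Inv_eq[OF I]) (use a in \<open>auto simp: n_def\<close>)
      thus ?thesis unfolding Q_def pq(1) by blast
    next
      case b
      define S where "S = R (k + s)"
      define S' where "S' = R (Suc (k + s))"
      have e1: "\<alpha> + s - 1 = Suc (k + s)" "\<alpha> + s - 2 = k + s" using b by auto
      have S'e: "S' = S - strict_corners E S" unfolding S_def S'_def using step[of "k + s"] b by simp
      interpret O: one_lev E S S' "strict_corners E S"
        by unfold_locales (use symE reflR finR S'e in \<open>auto simp: S_def\<close>)
      have c2: "card (strict_corners E S) = 2" unfolding S_def using levk[of "k + s"] b less.prems by simp
      have cl: "\<forall>v\<in>S'. \<forall>w\<in>S'. (v,w) \<in> E" using clq e1 unfolding is_clique_def S'_def by simp
      have T: "\<forall>v\<in>S'. \<exists>u\<in>S. (v,u) \<notin> E" using T0' e1 unfolding S_def S'_def by simp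
      have ek: "int \<alpha> - 1 = int k + 1" "int \<alpha> + 2 = n - int k" using b by (auto simp: n_def)
      show ?thesis
      proof (cases "j = \<alpha>")
        case True
        have "card S' = 3" using ctop e1 True unfolding S'_def by simp
        then obtain u1 u2 u3 where u: "S' = {u1,u2,u3}" "u1 \<noteq> u2" "u1 \<noteq> u3" "u2 \<noteq> u3" by (rule card3_obtain)
        obtain pos where "Inv E S (int \<alpha> - 1) (int \<alpha> + 2) (int \<alpha>) pos"
          using O.wrap_top3[OF u cl c2 T] by blast
        thus ?thesis unfolding Q_def S_def ek True by auto
      next
        case False
        have "card S' = 2" using ctop e1 False unfolding S'_def by simp
        then obtain p q where pq: "S' = {p,q}" "p \<noteq> q" by (rule card2_obtain)
        have pqE: "(p,q) \<in> E" using cl pq by auto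
        have "\<exists>pos. Inv E S (int \<alpha> - 1) (int \<alpha> + 2) (int j) pos"
          by (rule O.wrap_top2[OF pq(1,2) pqE c2 T]) (use False less.prems b ja in auto)
        then obtain pos where "Inv E S (int \<alpha> - 1) (int \<alpha> + 2) (int j) pos" by blast
        thus ?thesis unfolding Q_def S_def ek by auto
      qed
    next
      case c
      define S where "S = R (k + s)"
      define S' where "S' = R (Suc (k + s))"
      define S'' where "S'' = R (Suc (Suc (k + s)))"
      have S'e: "S' = S - strict_corners E S" unfolding S_def S'_def using step[of "k + s"] c by simp
      have S''e: "S'' = S' - strict_corners E S'" unfolding S'_def S''_def using step[of "Suc (k + s)"] c by simp
      have c0: "card (strict_corners E S) = 2" unfolding S_def using levk[of "k + s"] c by simp
      have c1: "card (strict_corners E S') = 3" unfolding S'_def using levk[of "Suc (k + s)"] c by simp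
      interpret T: two_lev E S S' S'' "strict_corners E S" "strict_corners E S'"
        by unfold_locales (use symE reflR finR S'e S''e in \<open>auto simp: S_def\<close>)
      have c0': "card (strict_corners E S) \<le> 2" using c0 by simp
      show ?thesis
      proof (cases "j + 1 = \<alpha>")
        case True
        have e1: "\<alpha> + s - 1 = Suc (Suc (k + s))" "\<alpha> + s - 2 = Suc (k + s)" using c True by auto
        have "card S'' = 2" using ctop e1 True unfolding S''_def by simp
        then obtain p q where pq: "S'' = {p,q}" "p \<noteq> q" by (rule card2_obtain)
        have cl: "\<forall>v\<in>S''. \<forall>w\<in>S''. (v,w) \<in> E" using clq e1 unfolding is_clique_def S''_def by simp
        have pqE: "(p,q) \<in> E" using cl pq by auto
        have T: "\<forall>v\<in>S''. \<exists>u\<in>S'. (v,u) \<notin> E" using T0' e1 unfolding S'_def S''_def by simp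
        obtain pos where "Inv E S (int \<alpha> - 2) (int \<alpha> + 3) (int j) pos"
          using T.wrap_dtop2[OF pq(1,2) pqE c0' c1 T, of "int j" "int \<alpha>"] True by auto
        moreover have "int \<alpha> - 2 = int k + 1" "int \<alpha> + 3 = n - int k" using c True by (auto simp: n_def)
        ultimately show ?thesis unfolding Q_def S_def by auto
      next
        case False
        have "Q j" by (rule less.hyps) (use c False ja in auto)
        then obtain pos where I: "Inv E (R (j + s)) (int j + 1) (n - int j) (int j) pos" unfolding Q_def by blast
        have e3: "j + s = Suc (Suc (k + s))" using c by simp
        have e: "R (j + s) = S''" unfolding S''_def e3 by (rule refl)
        have I': "Inv E S'' (int j + 1) (n - int j) (int j) pos" using I e by simp
        have J: "int j = int j + 1 - 1" by simp
        have wd: "int j + 1 + 2 \<le> n - int j" using False c by (simp add: n_def)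
        obtain pos' where "Inv E S (int j + 1 - 2) (n - int j + 2) (int j) pos'"
          using gen_double[OF symE reflR[of "k + s", folded S_def] finR[of "k + s", folded S_def]
            refl S'e refl S''e I' J wd c1 c0'] by blast
        moreover have "int j + 1 - 2 = int k + 1" "n - int j + 2 = n - int k" using c by auto
        ultimately show ?thesis unfolding Q_def S_def by auto
      qed
    next
      case d
      define S where "S = R (k + s)"
      define S' where "S' = R (Suc (k + s))"
      have S'e: "S' = S - strict_corners E S" unfolding S_def S'_def using step[of "k + s"] d by simp
      have "Q (k + 1)" by (rule less.hyps) (use d less.prems in auto)
      then obtain pos where I: "Inv E (R (k + 1 + s)) (int (k + 1) + 1) (n - int (k + 1)) (int j) pos"
        unfolding Q_def by blast
      have e4: "n - int (k + 1) = n - int k - 1" "int (k + 1) + 1 = int k + 2" "k + 1 + s = Suc (k + s)" by simp_all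
      have I': "Inv E S' (int k + 2) (n - int k - 1) (int j) pos" using I[unfolded e4] unfolding S'_def .
      have c2: "card (strict_corners E S) \<le> 2" unfolding S_def using levk[of "k + s"] d less.prems by simp
      have wd: "int k + 2 + 2 \<le> n - int k - 1" using d by (simp add: n_def)
      have J: "int j \<noteq> int k + 2" "int j \<noteq> n - int k - 1" "int j \<noteq> int k + 2 - 1" "int j \<noteq> n - int k - 1 + 1"
        "n - int k - 1 = int k + 2 + 2 \<longrightarrow> int j \<noteq> int k + 2 + 1"
        using d less.prems ja by (auto simp: n_def)
      obtain pos' where "Inv E S (int k + 2 - 1) (n - int k - 1 + 1) (int j) pos'"
        using gen_single[OF symE reflR[of "k + s", folded S_def] finR[of "k + s", folded S_def] S'e I' wd J c2]
        by blast
      moreover have "int k + 2 - 1 = int k + 1" "n - int k - 1 + 1 = n - int k" by simp_all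
      ultimately show ?thesis unfolding Q_def S_def by auto
    qed
  qed
  have "Q 0" by (rule main) (use j1 a2 in auto)
  thus ?thesis unfolding Q_def R_def n_def by simp
qed

lemma vec_len: "length (vec_of \<alpha> x) = \<alpha>" by (simp add: vec_of_def)

lemma vec_nth: "1 \<le> i \<Longrightarrow> i \<le> \<alpha> \<Longrightarrow> vec_of \<alpha> x ! (\<alpha> - i) = x i"
proof -
  assume i: "1 \<le> i" "i \<le> \<alpha>"
  have "vec_of \<alpha> x ! (\<alpha> - i) = x (rev [1..<Suc \<alpha>] ! (\<alpha> - i))"
    unfolding vec_of_def by (rule nth_map) (use i in simp)
  thus ?thesis using rev_upt_nth[OF i] by simp
qed

lemma final_contra:
  assumes gr: "graph V E" and cw: "cop_win V E" and cr: "corner_rank V E \<ge> 2"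
    and c1: "card (rank_set V E 1) = 1"
    and I: "Inv E (remaining V E 1) 1 hi J pos" and hi: "4 \<le> hi" and J: "1 < J" "J < hi"
  shows False
proof -
  have fin: "finite V" and symE: "sym E" and reflV: "\<forall>v\<in>V. (v,v)\<in>E" using gr by (auto simp: graph_def)
  have m: "0 < m0 V E" using cr cr_eq[OF cw] by simp
  have S': "remaining V E 1 = V - strict_corners E V" using rem_step[OF cw m] by (simp add: rem_0)
  have rs1: "rank_set V E 1 = strict_corners E V" using rank_set_lt[OF cw, of 1] cr by (simp add: rem_0)
  have c: "card (strict_corners E V) \<le> 2" using c1 rs1 by simp
  have "card (strict_corners E V) = 2 \<and> (\<exists>pos'. Inv E V (1 - 1) (hi + 1) J pos')"
    by (rule gen_single[OF symE reflV fin S' I _ _ _ _ _ _ c]) (use hi J in auto)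
  thus False using c1 rs1 by simp
qed

theorem lemma5p1:
  fixes \<alpha> j :: nat and x :: "nat \<Rightarrow> nat"
  assumes "\<alpha> \<ge> 2"
    and "1 < j" and "j \<le> \<alpha>" and "x j = 3"
    and "\<forall>i\<in>{1..\<alpha>}. i \<noteq> j \<longrightarrow> x i = 2"
  shows "((\<exists>(V::nat set) E. realizes V E (1 # vec_of \<alpha> x)) \<and>
          (\<forall>(V1::'a set) E1 (V2::'b set) E2.
              realizes V1 E1 (1 # vec_of \<alpha> x) \<longrightarrow> realizes V2 E2 (1 # vec_of \<alpha> x)
              \<longrightarrow> graph_iso V1 E1 V2 E2))
       \<and> \<not> (\<exists>(V::'c set) E. realizes V E (1 # vec_of \<alpha> x @ [1]))
       \<and> ((\<exists>(V::nat set) E. zero_realizes V E (vec_of \<alpha> x)) \<and>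
          (\<forall>(V1::'d set) E1 (V2::'e set) E2.
              zero_realizes V1 E1 (vec_of \<alpha> x) \<longrightarrow> zero_realizes V2 E2 (vec_of \<alpha> x)
              \<longrightarrow> graph_iso V1 E1 V2 E2))
       \<and> \<not> (\<exists>(V::'f set) E. zero_realizes V E (vec_of \<alpha> x @ [1]))"
proof -
  note a = assms
  have xi: "x i = (if i = j then 3 else 2)" if "1 \<le> i" "i \<le> \<alpha>" for i
    using a that by auto
  have chA: "\<exists>pos. Inv E V 1 (2 * int \<alpha> + 1) (int j) pos" if r: "realizes V E (1 # vec_of \<alpha> x)"
    for V :: "'g set" and E
  proof -
    have gr: "graph V E" and cw: "cop_win V E" and rv: "rank_card_vector V E = 1 # vec_of \<alpha> x"
      using r by (auto simp: realizes_def)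
    note rn = rcv_nth[OF rv]
    have cr: "corner_rank V E = \<alpha> + 1 + 0" using rn vec_len by simp
    have lev: "card (rank_set V E (i + 0)) = (if i = j then 3 else 2)" if "1 \<le> i" "i \<le> \<alpha>" for i
    proof -
      have "card (rank_set V E i) = (1 # vec_of \<alpha> x) ! (\<alpha> + 1 - i)" using rn cr that by simp
      also have "\<alpha> + 1 - i = Suc (\<alpha> - i)" using that by simp
      finally show ?thesis using vec_nth[OF that] xi[OF that] by simp
    qed
    have top: "card (rank_set V E (\<alpha> + 1 + 0)) = 1" using rn cr by simp
    obtain pos where "Inv E (remaining V E 0) 1 (2 * int \<alpha> + 1) (int j) pos"
      using charA[OF gr cw cr a(1,2,3) lev top] by blast
    thus ?thesis by (auto simp: rem_0)
  qed
  have chB: "\<exists>pos. Inv E V 1 (2 * int \<alpha>) (int j) pos" if r: "zero_realizes V E (vec_of \<alpha> x)"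
    for V :: "'g set" and E
  proof -
    have gr: "graph V E" and cw: "cop_win V E" and rv: "rank_card_vector V E = vec_of \<alpha> x"
      and t0: "type0 V E" using r by (auto simp: realizes_def zero_realizes_def)
    note rn = rcv_nth[OF rv]
    have cr: "corner_rank V E = \<alpha> + 0" using rn vec_len by simp
    have lev: "card (rank_set V E (i + 0)) = (if i = j then 3 else 2)" if "1 \<le> i" "i \<le> \<alpha>" for i
      using rn cr that vec_nth[OF that] xi[OF that] by simp
    have T0: "\<forall>v\<in>rank_set V E (\<alpha> + 0). \<exists>u\<in>remaining V E (\<alpha> + 0 - 2). (v,u) \<notin> E"
      using t0 cr unfolding type0_def type1_def by auto
    obtain pos where "Inv E (remaining V E 0) 1 (2 * int \<alpha>) (int j) pos"
      using charB[OF gr cw cr a(1,2,3) lev T0] by blast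
    thus ?thesis by (auto simp: rem_0)
  qed
  have P1: "\<exists>(V::nat set) E. realizes V E (1 # vec_of \<alpha> x)"
    using exist1[OF a] by blast
  have P2: "\<forall>(V1::'a set) E1 (V2::'b set) E2.
              realizes V1 E1 (1 # vec_of \<alpha> x) \<longrightarrow> realizes V2 E2 (1 # vec_of \<alpha> x)
              \<longrightarrow> graph_iso V1 E1 V2 E2"
  proof (intro allI impI)
    fix V1 :: "'a set" and E1 and V2 :: "'b set" and E2
    assume r1: "realizes V1 E1 (1 # vec_of \<alpha> x)" and r2: "realizes V2 E2 (1 # vec_of \<alpha> x)"
    obtain pos1 where I1: "Inv E1 V1 1 (2 * int \<alpha> + 1) (int j) pos1" using chA[OF r1] by blast
    obtain pos2 where I2: "Inv E2 V2 1 (2 * int \<alpha> + 1) (int j) pos2" using chA[OF r2] by blast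
    have "E1 \<subseteq> V1 \<times> V1" "E2 \<subseteq> V2 \<times> V2" using r1 r2 by (auto simp: realizes_def graph_def)
    thus "graph_iso V1 E1 V2 E2" using Inv_iso[OF I1 I2] by blast
  qed
  have P3: "\<not> (\<exists>(V::'c set) E. realizes V E (1 # vec_of \<alpha> x @ [1]))"
  proof
    assume "\<exists>(V::'c set) E. realizes V E (1 # vec_of \<alpha> x @ [1])"
    then obtain V :: "'c set" and E where r: "realizes V E (1 # vec_of \<alpha> x @ [1])" by blast
    have gr: "graph V E" and cw: "cop_win V E" and rv: "rank_card_vector V E = 1 # vec_of \<alpha> x @ [1]"
      using r by (auto simp: realizes_def)
    note rn = rcv_nth[OF rv]
    have cr: "corner_rank V E = \<alpha> + 1 + 1" using rn vec_len by simp
    have lev: "card (rank_set V E (i + 1)) = (if i = j then 3 else 2)" if "1 \<le> i" "i \<le> \<alpha>" for i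
    proof -
      have "card (rank_set V E (i + 1)) = (1 # vec_of \<alpha> x @ [1]) ! (\<alpha> + 1 + 1 - (i + 1))"
        using rn cr that by simp
      also have "\<alpha> + 1 + 1 - (i + 1) = Suc (\<alpha> - i)" using that by simp
      also have "(1 # vec_of \<alpha> x @ [1]) ! Suc (\<alpha> - i) = vec_of \<alpha> x ! (\<alpha> - i)"
        using that vec_len[of \<alpha> x] by (simp add: nth_append)
      finally show ?thesis using vec_nth[OF that] xi[OF that] by simp
    qed
    have top: "card (rank_set V E (\<alpha> + 1 + 1)) = 1" using rn cr by simp
    have c1: "card (rank_set V E 1) = 1"
    proof -
      have "card (rank_set V E 1) = (1 # vec_of \<alpha> x @ [1]) ! (\<alpha> + 1)" using rn cr by simp
      also have "\<dots> = 1" using vec_len[of \<alpha> x] by (simp add: nth_append)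
      finally show ?thesis .
    qed
    obtain pos where I: "Inv E (remaining V E 1) 1 (2 * int \<alpha> + 1) (int j) pos"
      using charA[OF gr cw cr a(1,2,3) lev top] by blast
    show False by (rule final_contra[OF gr cw _ c1 I]) (use cr a in auto)
  qed
  have P4: "\<exists>(V::nat set) E. zero_realizes V E (vec_of \<alpha> x)"
    using exist0[OF a] by blast
  have P5: "\<forall>(V1::'d set) E1 (V2::'e set) E2.
              zero_realizes V1 E1 (vec_of \<alpha> x) \<longrightarrow> zero_realizes V2 E2 (vec_of \<alpha> x)
              \<longrightarrow> graph_iso V1 E1 V2 E2"
  proof (intro allI impI)
    fix V1 :: "'d set" and E1 and V2 :: "'e set" and E2
    assume r1: "zero_realizes V1 E1 (vec_of \<alpha> x)" and r2: "zero_realizes V2 E2 (vec_of \<alpha> x)"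
    obtain pos1 where I1: "Inv E1 V1 1 (2 * int \<alpha>) (int j) pos1" using chB[OF r1] by blast
    obtain pos2 where I2: "Inv E2 V2 1 (2 * int \<alpha>) (int j) pos2" using chB[OF r2] by blast
    have "E1 \<subseteq> V1 \<times> V1" "E2 \<subseteq> V2 \<times> V2" using r1 r2 by (auto simp: zero_realizes_def realizes_def graph_def)
    thus "graph_iso V1 E1 V2 E2" using Inv_iso[OF I1 I2] by blast
  qed
  have P6: "\<not> (\<exists>(V::'f set) E. zero_realizes V E (vec_of \<alpha> x @ [1]))"
  proof
    assume "\<exists>(V::'f set) E. zero_realizes V E (vec_of \<alpha> x @ [1])"
    then obtain V :: "'f set" and E where r: "zero_realizes V E (vec_of \<alpha> x @ [1])" by blast
    have gr: "graph V E" and cw: "cop_win V E" and rv: "rank_card_vector V E = vec_of \<alpha> x @ [1]"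
      and t0: "type0 V E" using r by (auto simp: realizes_def zero_realizes_def)
    note rn = rcv_nth[OF rv]
    have cr: "corner_rank V E = \<alpha> + 1" using rn vec_len by simp
    have lev: "card (rank_set V E (i + 1)) = (if i = j then 3 else 2)" if "1 \<le> i" "i \<le> \<alpha>" for i
    proof -
      have "card (rank_set V E (i + 1)) = (vec_of \<alpha> x @ [1]) ! (\<alpha> + 1 - (i + 1))"
        using rn cr that by simp
      also have "\<alpha> + 1 - (i + 1) = \<alpha> - i" using that by simp
      also have "(vec_of \<alpha> x @ [1]) ! (\<alpha> - i) = vec_of \<alpha> x ! (\<alpha> - i)"
        using that vec_len[of \<alpha> x] by (simp add: nth_append)
      finally show ?thesis using vec_nth[OF that] xi[OF that] by simp
    qed
    have c1: "card (rank_set V E 1) = 1"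
    proof -
      have "card (rank_set V E 1) = (vec_of \<alpha> x @ [1]) ! \<alpha>" using rn cr by simp
      also have "\<dots> = 1" using vec_len[of \<alpha> x] by (simp add: nth_append)
      finally show ?thesis .
    qed
    have T0: "\<forall>v\<in>rank_set V E (\<alpha> + 1). \<exists>u\<in>remaining V E (\<alpha> + 1 - 2). (v,u) \<notin> E"
      using t0 cr unfolding type0_def type1_def by auto
    obtain pos where I: "Inv E (remaining V E 1) 1 (2 * int \<alpha>) (int j) pos"
      using charB[OF gr cw cr a(1,2,3) lev T0] by blast
    show False by (rule final_contra[OF gr cw _ c1 I]) (use cr a in auto)
  qed
  show ?thesis using P1 P2 P3 P4 P5 P6 by blast
qed

end
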